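(* Let $\Gamma$ be a primitive strongly regular graph with parameters $(v,k,\lambda,\mu)$, eigenvalues $k > e^+ > 0 > e^-$, and let $m^-$ be the multiplicity of $e^-$. Suppose $ve^- = m^-(e^- - k)$. Let $Y, Z$ be two different Delsarte cocliques of $\Gamma$. For a vertex $z \in Z \setminus Y$ let $b_z = \{ y \in Y : y \sim z \}$. Then: \begin{enumerate} \item[(a)] The set $\mathcal{B} := \{ b_z : z \in Z \setminus Y\}$ is a symmetric $2$-$\left( \frac{(e^+)^2 - (e^-)^{2}}{(e^+)^{2} + e^-}, -e^-, -(e^+)^2 - e^- \right)$ design (on the point set $Y\setminus Z$). \item[(b)] $|Y \cap Z| = m^- - \frac{(e^+)^2 - (e^-)^2}{(e^+)^2 + e^-} = \frac{(e^-+1)e^+}{(e^+)^2 + e^-}$. \item[(c)] For every vertex $w$ of $\Gamma$ with $w \notin Y$ and $w \notin Z$, the set $\{y \in Y : y \sim w\}$ contains exactly $e^+$ elements of $Y \cap Z$. \item[(d)] $\Gamma$ contains at most $m^-+1$ Delsarte cocliques. If $\Gamma$ contains exactly $m^-+1$ Delsarte cocliques, then a symmetric $2$-$\left(\frac{(e^+)^2+ e^+e^-+e^+ - (e^-)^2}{(e^+)^2 + e^-}, \frac{(e^-+1)e^+}{(e^+)^2 + e^-}, \frac{-(e^+)^2 + e^+}{(e^+)^2 + e^-}\right)$ design exists, and every vertex of $\Gamma$ lies in exactly $1+\frac{(e^-+1)e^+}{(e^+)^2 + e^-}$ Delsarte cocliques. \item[(e)] The common intersection of any three distinct Delsarte cocliques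 of $\Gamma$ has size $\frac{-(e^+)^2 + e^+}{(e^+)^2 + e^-}$. \item[(f)] If $e^+$ and $e^-$ are coprime and $e^+ > 1$, then $\Gamma$ contains at most two Delsarte cocliques. \end{enumerate}
   Context: A strongly regular graph with parameters $(v,k,\lambda,\mu)$ has $v$ vertices, is $k$-regular, any two adjacent vertices have exactly $\lambda$ common neighbours and any two distinct non-adjacent vertices have exactly $\mu$ common neighbours. Its adjacency matrix has eigenvalues $k$, $e^+$, $e^-$ with $k \ge e^+ \ge 0 > e^-$; $m^-$ denotes the multiplicity of $e^-$. It is primitive if both it and its complement are connected. $u \sim w$ means $u$ and $w$ are adjacent. A coclique is a set of pairwise non-adjacent vertices; a Delsarte coclique is a coclique of size $\frac{ve^-}{e^- - k}$. A $2$-$(\tilde v,\tilde k,\tilde\lambda)$ design is a set $\mathcal{B}$ of $\tilde k$-subsets (blocks) of a $\tilde v$-element point set such that every pair of distinct points lies in exactly $\tilde\lambda$ blocks; it is symmetric if any two distinct blocks meet in the same number of points (equivalently, for a $2$-design with at least two blocks, the number of blocks equals $\tilde v$). *)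

theory Defs
  imports Main "Jordan_Normal_Form.Char_Poly"
begin

text \<open>Simple graphs on the vertex set {0..<v} (natural numbers), given by an
  adjacency relation E (only its restriction to {0..<v} matters).\<close>

definition simple_graph :: "nat \<Rightarrow> (nat \<Rightarrow> nat \<Rightarrow> bool) \<Rightarrow> bool" where
  "simple_graph v E \<longleftrightarrow>
     (\<forall>x<v. \<not> E x x) \<and> (\<forall>x<v. \<forall>y<v. E x y \<longleftrightarrow> E y x)"

definition srg :: "nat \<Rightarrow> (nat \<Rightarrow> nat \<Rightarrow> bool) \<Rightarrow> nat \<Rightarrow> nat \<Rightarrow> nat \<Rightarrow> bool" where
  "srg v E k lam mu \<longleftrightarrow> simple_graph v E \<and>
     (\<forall>x<v. card {y. y < v \<and> E x y} = k) \<and>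
     (\<forall>x<v. \<forall>y<v. x \<noteq> y \<and> E x y \<longrightarrow> card {z. z < v \<and> E x z \<and> E y z} = lam) \<and>
     (\<forall>x<v. \<forall>y<v. x \<noteq> y \<and> \<not> E x y \<longrightarrow> card {z. z < v \<and> E x z \<and> E y z} = mu)"

definition connected_graph :: "nat \<Rightarrow> (nat \<Rightarrow> nat \<Rightarrow> bool) \<Rightarrow> bool" where
  "connected_graph v E \<longleftrightarrow>
     (\<forall>x<v. \<forall>y<v. (\<lambda>a b. a < v \<and> b < v \<and> E a b)\<^sup>*\<^sup>* x y)"

definition complement_graph :: "(nat \<Rightarrow> nat \<Rightarrow> bool) \<Rightarrow> nat \<Rightarrow> nat \<Rightarrow> bool" where
  "complement_graph E = (\<lambda>a b. a \<noteq> b \<and> \<not> E a b)"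

definition primitive_graph :: "nat \<Rightarrow> (nat \<Rightarrow> nat \<Rightarrow> bool) \<Rightarrow> bool" where
  "primitive_graph v E \<longleftrightarrow> connected_graph v E \<and> connected_graph v (complement_graph E)"

definition adj_matrix :: "nat \<Rightarrow> (nat \<Rightarrow> nat \<Rightarrow> bool) \<Rightarrow> real mat" where
  "adj_matrix v E = mat v v (\<lambda>(i, j). if E i j then 1 else 0)"

definition coclique :: "nat \<Rightarrow> (nat \<Rightarrow> nat \<Rightarrow> bool) \<Rightarrow> nat set \<Rightarrow> bool" where
  "coclique v E C \<longleftrightarrow> C \<subseteq> {0..<v} \<and> (\<forall>x\<in>C. \<forall>y\<in>C. \<not> E x y)"

definition delsarte_coclique ::
  "nat \<Rightarrow> (nat \<Rightarrow> nat \<Rightarrow> bool) \<Rightarrow> nat \<Rightarrow> real \<Rightarrow> nat set \<Rightarrow> bool" where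
  "delsarte_coclique v E k em C \<longleftrightarrow>
     coclique v E C \<and> real (card C) = real v * em / (em - real k)"

definition design2 :: "'p set \<Rightarrow> 'p set set \<Rightarrow> real \<Rightarrow> real \<Rightarrow> real \<Rightarrow> bool" where
  "design2 P Bs vt kt lt \<longleftrightarrow> finite P \<and> real (card P) = vt \<and>
     (\<forall>b\<in>Bs. b \<subseteq> P \<and> real (card b) = kt) \<and>
     (\<forall>x\<in>P. \<forall>y\<in>P. x \<noteq> y \<longrightarrow> real (card {b\<in>Bs. x \<in> b \<and> y \<in> b}) = lt)"

definition symmetric_design :: "'p set \<Rightarrow> 'p set set \<Rightarrow> real \<Rightarrow> real \<Rightarrow> real \<Rightarrow> bool" where
  "symmetric_design P Bs vt kt lt \<longleftrightarrow> design2 P Bs vt kt lt \<and> real (card Bs) = vt"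

end

theory Submission
  imports Defs "Jordan_Normal_Form.Schur_Decomposition"
begin


definition ind :: "(nat \<Rightarrow> nat \<Rightarrow> bool) \<Rightarrow> nat \<Rightarrow> nat \<Rightarrow> 'a::field" where
  "ind E i j = (if E i j then 1 else 0)"

definition gm :: "nat \<Rightarrow> (nat \<Rightarrow> nat \<Rightarrow> bool) \<Rightarrow> 'a::field mat" where
  "gm v E = mat v v (\<lambda>(i, j). ind E i j)"

lemma card_sum_ind:
  "finite B \<Longrightarrow> of_nat (card {y\<in>B. P y}) = (\<Sum>y\<in>B. (if P y then 1 else 0 :: 'a::field))"
proof -
  assume fB: "finite B"
  have "(\<Sum>y\<in>B. (if P y then 1 else 0 :: 'a)) = (\<Sum>y\<in>B. of_bool (P y))"
    by (rule sum.cong) auto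
  also have "\<dots> = of_nat (card (B \<inter> {y. P y}))" using fB by simp
  also have "B \<inter> {y. P y} = {y\<in>B. P y}" by auto
  finally show ?thesis by simp
qed

lemma srgD:
  assumes "srg v E k lam mu"
  shows "\<And>x. x < v \<Longrightarrow> \<not> E x x" "\<And>x y. x<v \<Longrightarrow> y<v \<Longrightarrow> E x y \<longleftrightarrow> E y x"
   "\<And>x. x<v \<Longrightarrow> card {y. y < v \<and> E x y} = k"
   "\<And>x y. x<v \<Longrightarrow> y<v \<Longrightarrow> x \<noteq> y \<Longrightarrow> E x y \<Longrightarrow> card {z. z < v \<and> E x z \<and> E y z} = lam"
   "\<And>x y. x<v \<Longrightarrow> y<v \<Longrightarrow> x \<noteq> y \<Longrightarrow> \<not> E x y \<Longrightarrow> card {z. z < v \<and> E x z \<and> E y z} = mu"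
proof -
  note h = assms[unfolded srg_def simple_graph_def]
  show "\<And>x. x < v \<Longrightarrow> \<not> E x x" using h by simp
  show "\<And>x y. x<v \<Longrightarrow> y<v \<Longrightarrow> E x y \<longleftrightarrow> E y x" using h by simp
  show "\<And>x. x<v \<Longrightarrow> card {y. y < v \<and> E x y} = k" using h by simp
  show "\<And>x y. x<v \<Longrightarrow> y<v \<Longrightarrow> x \<noteq> y \<Longrightarrow> E x y \<Longrightarrow> card {z. z < v \<and> E x z \<and> E y z} = lam" using h by simp
  show "\<And>x y. x<v \<Longrightarrow> y<v \<Longrightarrow> x \<noteq> y \<Longrightarrow> \<not> E x y \<Longrightarrow> card {z. z < v \<and> E x z \<and> E y z} = mu" using h by simp
qed

lemma srg_sym: "srg v E k lam mu \<Longrightarrow> x < v \<Longrightarrow> y < v \<Longrightarrow> E x y = E y x"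
  using srgD(2) by blast

lemma srg_irr: "srg v E k lam mu \<Longrightarrow> x < v \<Longrightarrow> \<not> E x x"
  using srgD(1) by blast

lemma ind_sym: "srg v E k lam mu \<Longrightarrow> x < v \<Longrightarrow> y < v \<Longrightarrow> ind E x y = ind E y x"
  unfolding ind_def using srg_sym by metis

lemma ind_irr: "srg v E k lam mu \<Longrightarrow> x < v \<Longrightarrow> ind E x x = 0"
  unfolding ind_def using srg_irr by metis

lemma ind_sq: "ind E x y * ind E x y = ind E x y"
  unfolding ind_def by simp

lemma srg_deg:
  assumes "srg v E k lam mu" "x < v"
  shows "(\<Sum>y\<in>{0..<v}. ind E x y) = (of_nat k :: 'a::field)"
proof -
  have c: "card {y. y < v \<and> E x y} = k" using srgD(3)[OF assms] .
  have e: "{y. y < v \<and> E x y} = {y\<in>{0..<v}. E x y}" by auto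
  have "(\<Sum>y\<in>{0..<v}. ind E x y) = (of_nat (card {y\<in>{0..<v}. E x y}) :: 'a)"
    unfolding ind_def by (rule card_sum_ind[symmetric], simp)
  then show ?thesis unfolding e[symmetric] c .
qed

lemma srg_deg':
  assumes "srg v E k lam mu" "x < v"
  shows "(\<Sum>y\<in>{0..<v}. ind E y x) = (of_nat k :: 'a::field)"
proof -
  have "(\<Sum>y\<in>{0..<v}. ind E y x) = (\<Sum>y\<in>{0..<v}. (ind E x y :: 'a))"
  proof (rule sum.cong)
    fix y assume "y \<in> {0..<v}"
    then show "ind E y x = (ind E x y :: 'a)" using ind_sym[OF assms(1)] assms(2) by simp
  qed simp
  then show ?thesis using srg_deg[OF assms] by simp
qed

lemma srg_common:
  assumes "srg v E k lam mu" "x < v" "y < v" "x \<noteq> y"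
  shows "(\<Sum>z\<in>{0..<v}. ind E x z * ind E y z) = (if E x y then of_nat lam else (of_nat mu :: 'a::field))"
proof -
  have c: "card {z. z < v \<and> E x z \<and> E y z} = (if E x y then lam else mu)"
    using srgD(4)[OF assms(1-4)] srgD(5)[OF assms(1-4)] by (cases "E x y") simp_all
  have e: "{z. z < v \<and> E x z \<and> E y z} = {z\<in>{0..<v}. E x z \<and> E y z}" by auto
  have "(\<Sum>z\<in>{0..<v}. ind E x z * ind E y z) = (\<Sum>z\<in>{0..<v}. (if E x z \<and> E y z then 1 else 0 :: 'a))"
    by (rule sum.cong) (auto simp: ind_def)
  also have "\<dots> = of_nat (card {z\<in>{0..<v}. E x z \<and> E y z})"
    by (rule card_sum_ind[symmetric], simp)
  also have "\<dots> = of_nat (if E x y then lam else mu)" unfolding e[symmetric] c ..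
  finally show ?thesis by simp
qed

lemma srg_self:
  assumes "srg v E k lam mu" "x < v"
  shows "(\<Sum>z\<in>{0..<v}. ind E x z * ind E x z) = (of_nat k :: 'a::field)"
  unfolding ind_sq using srg_deg[OF assms] .

lemma srg_Q:
  assumes "srg v E k lam mu" "x < v" "y < v"
  shows "(\<Sum>z\<in>{0..<v}. ind E x z * ind E y z) = of_nat mu + (of_nat lam - of_nat mu) * ind E x y
     + (if x = y then of_nat k - of_nat mu else (0 :: 'a::field))"
proof (cases "x = y")
  case True
  have "ind E x x = (0::'a)" using ind_irr[OF assms(1,2)] .
  with True show ?thesis using srg_self[OF assms(1,2)] by simp
next
  case False
  then show ?thesis using srg_common[OF assms False] by (cases "E x y") (simp_all add: ind_def)
qed


lemma eig_gen:
  assumes srg: "srg v E k lam mu" and ev: "eigenvalue (gm v E :: 'a::field mat) a"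
  shows "a = of_nat k \<or> a * a = (of_nat lam - of_nat mu) * a + (of_nat k - of_nat mu)"
proof -
  have dr: "dim_row (gm v E :: 'a mat) = v" by (simp add: gm_def)
  obtain x where x: "x \<in> carrier_vec v" "x \<noteq> 0\<^sub>v v" "(gm v E :: 'a mat) *\<^sub>v x = a \<cdot>\<^sub>v x"
    using ev unfolding eigenvalue_def eigenvector_def dr by blast
  have dx: "dim_vec x = v" using x(1) by simp
  have H: "(\<Sum>j\<in>{0..<v}. ind E i j * x$j) = a * x$i" if i: "i < v" for i
  proof -
    have "((gm v E :: 'a mat) *\<^sub>v x) $ i = (a \<cdot>\<^sub>v x) $ i" using x(3) by simp
    then show ?thesis using i dx by (simp add: gm_def scalar_prod_def)
  qed
  define S where "S = (\<Sum>i\<in>{0..<v}. x$i)"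
  have 1: "a * S = of_nat k * S"
  proof -
    have "a * S = (\<Sum>i\<in>{0..<v}. a * x$i)" unfolding S_def by (simp add: sum_distrib_left)
    also have "\<dots> = (\<Sum>i\<in>{0..<v}. \<Sum>j\<in>{0..<v}. ind E i j * x$j)" using H by simp
    also have "\<dots> = (\<Sum>j\<in>{0..<v}. \<Sum>i\<in>{0..<v}. ind E i j * x$j)" by (rule sum.swap)
    also have "\<dots> = (\<Sum>j\<in>{0..<v}. (\<Sum>i\<in>{0..<v}. ind E i j) * x$j)" by (simp add: sum_distrib_right)
    also have "\<dots> = (\<Sum>j\<in>{0..<v}. of_nat k * x$j)" by (intro sum.cong refl) (simp add: srg_deg'[OF srg])
    finally show ?thesis unfolding S_def by (simp add: sum_distrib_left)
  qed
  have 2: "a * a * x$i = of_nat mu * S + (of_nat lam - of_nat mu) * a * x$i + (of_nat k - of_nat mu) * x$i"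
    if i: "i < v" for i
  proof -
    have "a * a * x$i = a * (\<Sum>j\<in>{0..<v}. ind E i j * x$j)" using H[OF i] by simp
    also have "\<dots> = (\<Sum>j\<in>{0..<v}. ind E i j * (a * x$j))" by (simp add: sum_distrib_left algebra_simps)
    also have "\<dots> = (\<Sum>j\<in>{0..<v}. ind E i j * (\<Sum>l\<in>{0..<v}. ind E j l * x$l))" using H by simp
    also have "\<dots> = (\<Sum>j\<in>{0..<v}. \<Sum>l\<in>{0..<v}. ind E i j * ind E l j * x$l)"
    proof (rule sum.cong[OF refl])
      fix j assume j: "j \<in> {0..<v}"
      have "ind E i j * (\<Sum>l\<in>{0..<v}. ind E j l * x$l) = (\<Sum>l\<in>{0..<v}. ind E i j * ind E j l * x$l)"
        by (simp add: sum_distrib_left algebra_simps)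
      also have "\<dots> = (\<Sum>l\<in>{0..<v}. ind E i j * ind E l j * x$l)"
        using ind_sym[OF srg] j by (intro sum.cong) auto
      finally show "ind E i j * (\<Sum>l\<in>{0..<v}. ind E j l * x$l) = (\<Sum>l\<in>{0..<v}. ind E i j * ind E l j * x$l)" .
    qed
    also have "\<dots> = (\<Sum>l\<in>{0..<v}. \<Sum>j\<in>{0..<v}. ind E i j * ind E l j * x$l)" by (rule sum.swap)
    also have "\<dots> = (\<Sum>l\<in>{0..<v}. (\<Sum>j\<in>{0..<v}. ind E i j * ind E l j) * x$l)" by (simp add: sum_distrib_right)
    also have "\<dots> = (\<Sum>l\<in>{0..<v}. (of_nat mu + (of_nat lam - of_nat mu) * ind E i l
         + (if i = l then of_nat k - of_nat mu else 0)) * x$l)"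
      by (intro sum.cong refl) (simp add: srg_Q[OF srg i])
    also have "\<dots> = (\<Sum>l\<in>{0..<v}. of_nat mu * x$l + (of_nat lam - of_nat mu) * (ind E i l * x$l)
         + (if i = l then (of_nat k - of_nat mu) * x$l else 0))"
      by (intro sum.cong refl) (simp add: algebra_simps)
    also have "\<dots> = of_nat mu * S + (of_nat lam - of_nat mu) * (\<Sum>l\<in>{0..<v}. ind E i l * x$l)
         + (\<Sum>l\<in>{0..<v}. (if i = l then (of_nat k - of_nat mu) * x$l else 0))"
      unfolding S_def by (simp add: sum.distrib sum_distrib_left)
    also have "(\<Sum>l\<in>{0..<v}. (if i = l then (of_nat k - of_nat mu) * x$l else 0)) = (of_nat k - of_nat mu) * x$i"
      using i by (simp add: sum.delta)
    finally show ?thesis using H[OF i] by (simp add: algebra_simps)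
  qed
  obtain i where i: "i < v" "x$i \<noteq> 0" using x(1,2) by (metis carrier_vecD eq_vecI index_zero_vec(1) index_zero_vec(2))
  show ?thesis
  proof (cases "a = of_nat k")
    case False
    with 1 have "S = 0" by simp
    with 2[OF i(1)] have "(a * a - ((of_nat lam - of_nat mu) * a + (of_nat k - of_nat mu))) * x$i = 0"
      by (simp add: algebra_simps)
    with i(2) show ?thesis by simp
  qed simp
qed


definition mtr :: "'a::comm_ring_1 mat \<Rightarrow> 'a" where
  "mtr M = (\<Sum>i\<in>{0..<dim_row M}. M $$ (i,i))"

lemma mtr_comm:
  assumes "A \<in> carrier_mat n n" "B \<in> carrier_mat n n"
  shows "mtr (A * B) = mtr (B * A)"
proof -
  have "mtr (A * B) = (\<Sum>i\<in>{0..<n}. \<Sum>j\<in>{0..<n}. A $$ (i,j) * B $$ (j,i))"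
    unfolding mtr_def using assms by (simp add: scalar_prod_def)
  also have "\<dots> = (\<Sum>j\<in>{0..<n}. \<Sum>i\<in>{0..<n}. A $$ (i,j) * B $$ (j,i))" by (rule sum.swap)
  also have "\<dots> = mtr (B * A)"
    unfolding mtr_def using assms by (simp add: scalar_prod_def mult.commute)
  finally show ?thesis .
qed

lemma mtr_similar:
  assumes A: "A \<in> carrier_mat n n" and sim: "similar_mat_wit A B P Q"
  shows "mtr A = mtr B"
proof -
  note d = similar_mat_witD2[OF A sim]
  have "mtr A = mtr ((P * B) * Q)" using d by simp
  also have "\<dots> = mtr (Q * (P * B))" by (rule mtr_comm, insert d, auto)
  also have "Q * (P * B) = (Q * P) * B" using d by (metis assoc_mult_mat)
  also have "\<dots> = B" using d by simp
  finally show ?thesis .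
qed

lemma mtr_upper_sq:
  assumes B: "B \<in> carrier_mat n n" and ut: "upper_triangular B"
  shows "mtr (B * B) = (\<Sum>i\<in>{0..<n}. B $$ (i,i) * B $$ (i,i))"
proof -
  have "mtr (B * B) = (\<Sum>i\<in>{0..<n}. \<Sum>j\<in>{0..<n}. B $$ (i,j) * B $$ (j,i))"
    unfolding mtr_def using B by (simp add: scalar_prod_def)
  also have "\<dots> = (\<Sum>i\<in>{0..<n}. \<Sum>j\<in>{0..<n}. if j = i then B $$ (i,i) * B $$ (i,i) else 0)"
  proof (intro sum.cong refl)
    fix i j assume i: "i \<in> {0..<n}" and j: "j \<in> {0..<n}"
    show "B $$ (i,j) * B $$ (j,i) = (if j = i then B $$ (i,i) * B $$ (i,i) else 0)"
    proof (cases "j < i")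
      case True
      have "B $$ (i,j) = 0" using upper_triangularD[OF ut True] B i by simp
      then show ?thesis using True by simp
    next
      case False
      show ?thesis
      proof (cases "j = i")
        case False2: False
        with False have "i < j" by simp
        have "B $$ (j,i) = 0" using upper_triangularD[OF ut \<open>i < j\<close>] B j by simp
        then show ?thesis using False2 by simp
      qed simp
    qed
  qed
  also have "\<dots> = (\<Sum>i\<in>{0..<n}. B $$ (i,i) * B $$ (i,i))" by (simp add: sum.delta')
  finally show ?thesis .
qed

lemma order_lin_prod:
  fixes x :: "'a::field"
  shows "Polynomial.order x (\<Prod>a\<leftarrow>es. [:-a, 1:]) = count_list es x"
proof (induct es)
  case Nil
  then show ?case by (simp add: order_0I)
next
  case (Cons a es)
  have nz: "(\<Prod>a\<leftarrow>es. [:-a, 1:]) \<noteq> (0 :: 'a poly)"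
    by (subst prod_list_zero_iff) auto
  have "[:-a, 1:] \<noteq> (0 :: 'a poly)" by simp
  then have nz2: "[:-a, 1:] * (\<Prod>a\<leftarrow>es. [:-a, 1:]) \<noteq> (0 :: 'a poly)" using nz by (simp only: mult_eq_0_iff) simp
  have o1: "Polynomial.order x [:-a, 1:] = (if a = x then 1 else 0)"
  proof (cases "a = x")
    case True
    then show ?thesis using order_power_n_n[of x 1] by simp
  next
    case False
    then have "poly [:-a, 1:] x \<noteq> 0" by simp
    then show ?thesis using False by (simp add: order_0I)
  qed
  show ?case using order_mult[OF nz2] o1 Cons by simp
qed


interpretation mpr: map_poly_inj_idom_divide_hom "complex_of_real" ..

lemma adj_gm: "adj_matrix v E = gm v E"
  unfolding adj_matrix_def gm_def ind_def by simp

lemma gm_carrier: "gm v E \<in> carrier_mat v v" unfolding gm_def by simp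

lemma gm_map: "map_mat complex_of_real (gm v E) = gm v E"
  by (rule eq_matI) (auto simp: gm_def ind_def)

lemma count_sum_list:
  fixes es :: "complex list"
  assumes "\<forall>a\<in>set es. a = kk \<or> a = rr \<or> a = ss"
  shows "sum_list (map (\<lambda>a. (a - kk) * (a - rr)) es) = of_nat (count_list es ss) * ((ss - kk) * (ss - rr))"
  using assms by (induct es) (auto simp: algebra_simps)

lemma spectral:
  assumes srg: "srg v E k lam mu"
    and er: "eigenvalue (adj_matrix v E) r" and es_: "eigenvalue (adj_matrix v E) s"
    and rk: "r \<noteq> real k" and sk: "s \<noteq> real k" and rs: "r \<noteq> s"
  shows "r + s = real lam - real mu" "r * s = real mu - real k"
    "real (Polynomial.order s (char_poly (adj_matrix v E))) * ((s - k) * (s - r)) = real v * real k * (1 + r)"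
proof -
  have r2: "r * r = (real lam - real mu) * r + (real k - real mu)"
    using eig_gen[OF srg er[unfolded adj_gm]] rk by simp
  have s2: "s * s = (real lam - real mu) * s + (real k - real mu)"
    using eig_gen[OF srg es_[unfolded adj_gm]] sk by simp
  have "(r - s) * (r + s) = (r - s) * (real lam - real mu)" using r2 s2 by (simp add: algebra_simps)
  with rs show rps: "r + s = real lam - real mu" by simp
  have "(real lam - real mu) * r = (r + s) * r" by (simp only: rps)
  with r2 have "r * r = r * r + r * s + (real k - real mu)" by (simp add: algebra_simps)
  then show rts: "r * s = real mu - real k" by linarith
  define Ac :: "complex mat" where "Ac = gm v E"
  have Ac: "Ac \<in> carrier_mat v v" unfolding Ac_def by (rule gm_carrier)
  have cp: "char_poly Ac = map_poly complex_of_real (char_poly (adj_matrix v E))"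
    unfolding Ac_def adj_gm gm_map[symmetric] by (rule of_real_hom.char_poly_hom[OF gm_carrier])
  obtain es where es: "char_poly Ac = (\<Prod>a\<leftarrow>es. [:-a, 1:])" "length es = v"
    using char_poly_factorized[OF Ac] by blast
  have elems: "a = of_real (real k) \<or> a = of_real r \<or> a = of_real s" if a: "a \<in> set es" for a
  proof -
    have "count_list es a \<noteq> 0" using a by (simp add: count_list_0_iff)
    then have "Polynomial.order a (char_poly Ac) \<noteq> 0" unfolding es by (simp add: order_lin_prod)
    then have "poly (char_poly Ac) a = 0" using order_root by blast
    then have "eigenvalue Ac a" using eigenvalue_root_char_poly[OF Ac] by simp
    then have "a = of_nat k \<or> a * a = (of_nat lam - of_nat mu) * a + (of_nat k - of_nat mu)"
      using eig_gen[OF srg] unfolding Ac_def by blast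
    moreover have "complex_of_nat lam - complex_of_nat mu = complex_of_real (r + s)" using rps
      by (metis of_real_diff of_real_of_nat_eq)
    moreover have "complex_of_nat k - complex_of_nat mu = - complex_of_real (r * s)" using rts
      by (metis minus_diff_eq of_real_diff of_real_minus of_real_of_nat_eq)
    ultimately have "a = of_nat k \<or> a * a = complex_of_real (r + s) * a - complex_of_real (r * s)"
      by simp
    then have "a = of_nat k \<or> (a - of_real r) * (a - of_real s) = 0"
      by (auto simp: algebra_simps)
    then show ?thesis by auto
  qed
  obtain B P Q where sd: "schur_decomposition Ac es = (B, P, Q)" by (cases "schur_decomposition Ac es") auto
  from schur_decomposition[OF Ac es(1) sd]
  have sim: "similar_mat_wit Ac B P Q" and ut: "upper_triangular B" and dg: "diag_mat B = es" by auto
  have B: "B \<in> carrier_mat v v" using similar_mat_witD2[OF Ac sim] by auto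
  have Bd: "B $$ (i,i) = es ! i" if "i < v" for i
    using dg that B unfolding diag_mat_def by (metis (no_types, lifting) carrier_matD(1) diff_zero length_map length_upt nth_map nth_upt plus_nat.add_0)
  have t1: "mtr Ac = 0"
    unfolding mtr_def Ac_def gm_def by (auto intro!: sum.neutral simp: ind_irr[OF srg])
  have t1': "mtr B = (\<Sum>i\<in>{0..<v}. es ! i)" unfolding mtr_def using B Bd by simp
  have S1: "(\<Sum>i\<in>{0..<v}. es ! i) = 0" using t1 t1' mtr_similar[OF Ac sim] by simp
  have AA: "mtr (Ac * Ac) = of_nat v * of_nat k"
  proof -
    have "mtr (Ac * Ac) = (\<Sum>i\<in>{0..<v}. \<Sum>j\<in>{0..<v}. ind E i j * ind E j i)"
      unfolding mtr_def Ac_def gm_def by (simp add: scalar_prod_def)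
    also have "\<dots> = (\<Sum>i\<in>{0..<v}. \<Sum>j\<in>{0..<v}. ind E i j * ind E i j)"
      by (intro sum.cong refl) (metis atLeastLessThan_iff ind_sym[OF srg])
    also have "\<dots> = (\<Sum>i\<in>{0..<v}. of_nat k)" by (intro sum.cong refl) (simp add: srg_self[OF srg])
    finally show ?thesis by simp
  qed
  have pw: "Ac ^\<^sub>m 2 = Ac * Ac" "B ^\<^sub>m 2 = B * B" using Ac B by (simp_all add: numeral_2_eq_2)
  have sim2: "similar_mat_wit (Ac * Ac) (B * B) P Q" using similar_mat_wit_pow[OF sim, of 2] pw by simp
  have S2: "(\<Sum>i\<in>{0..<v}. es ! i * es ! i) = of_nat v * of_nat k"
  proof -
    have "mtr (B * B) = (\<Sum>i\<in>{0..<v}. es ! i * es ! i)" using mtr_upper_sq[OF B ut] Bd by simp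
    moreover have "mtr (Ac * Ac) = mtr (B * B)" by (rule mtr_similar[OF _ sim2], insert Ac, auto)
    ultimately show ?thesis using AA by simp
  qed
  define kk where "kk = complex_of_real (real k)"
  define rr where "rr = complex_of_real r"
  define ss where "ss = complex_of_real s"
  have "sum_list (map (\<lambda>a. (a - kk) * (a - rr)) es) = (\<Sum>i\<in>{0..<v}. (es ! i - kk) * (es ! i - rr))"
    by (subst sum_list_sum_nth) (simp add: es(2))
  also have "\<dots> = (\<Sum>i\<in>{0..<v}. es ! i * es ! i) - (kk + rr) * (\<Sum>i\<in>{0..<v}. es ! i) + of_nat v * (kk * rr)"
    by (simp add: algebra_simps sum.distrib sum_subtractf sum_distrib_left)
  also have "\<dots> = of_nat v * of_nat k * (1 + rr)" unfolding S1 S2 kk_def by (simp add: algebra_simps)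
  finally have L: "sum_list (map (\<lambda>a. (a - kk) * (a - rr)) es) = of_nat v * of_nat k * (1 + rr)" .
  have R: "sum_list (map (\<lambda>a. (a - kk) * (a - rr)) es) = of_nat (count_list es ss) * ((ss - kk) * (ss - rr))"
    by (rule count_sum_list) (use elems kk_def rr_def ss_def in auto)
  have ord: "count_list es ss = Polynomial.order s (char_poly (adj_matrix v E))"
  proof -
    have "count_list es ss = Polynomial.order ss (char_poly Ac)" unfolding es by (simp add: order_lin_prod)
    also have "\<dots> = Polynomial.order s (char_poly (adj_matrix v E))" unfolding cp ss_def by (rule mpr.order_hom)
    finally show ?thesis .
  qed
  from L R ord have "complex_of_real (real (Polynomial.order s (char_poly (adj_matrix v E))) * ((s - k) * (s - r)))
      = complex_of_real (real v * real k * (1 + r))"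
    unfolding kk_def rr_def ss_def by simp
  then show "real (Polynomial.order s (char_poly (adj_matrix v E))) * ((s - k) * (s - r)) = real v * real k * (1 + r)"
    using of_real_eq_iff by blast
qed




lemma alg_P1: fixes c m s k r v :: real
  assumes "c*(s-k) = v*s" "m*v = (k-r)*(k-s)" "s - k \<noteq> 0" shows "c*m = -s*(k-r)"
proof -
  have "(c*m + s*(k-r))*(s-k) = 0" using assms(1,2) by (Groebner_Basis.algebra)
  then show ?thesis using assms(3) by simp
qed

lemma alg_I1: fixes r s k m v c :: real
  assumes "r*s = m - k" "c*m = -s*(k-r)" "c*(s-k) = v*s"
  shows "c*(c*m + k - m) + 2*s*(c*k) + (v - c)*(s*s) = 0"
  using assms by (Groebner_Basis.algebra)


lemma alg_I2: fixes r s k l m v c :: real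
  assumes "l = m + r + s" "m = k + r*s" "s*(s-r) = k*(1+r)" "m*(v-c) = k*(k-r)" "c*m = -s*(k-r)"
  shows "m*(m*s*s - s*(k-m) - s*s + 2*(-r*r-s)*s*(k-1) - 2*r*s*l + (-r*r-s)*(-r*r-s)*(v-c-1) + (r*r - 2*(-r*r-s)*r)*(k+s)) = 0"
  using assms by (Groebner_Basis.algebra)

lemma decomp3:
  fixes f :: "nat \<Rightarrow> real"
  assumes "C \<subseteq> {0..<v}" "x < v" "x \<notin> C"
  shows "sum f {0..<v} = sum f ({0..<v} - C - {x}) + sum f C + f x"
proof -
  have fC: "finite C" using assms(1) finite_subset by blast
  have "sum f {0..<v} = sum f ({0..<v} - C) + sum f C" by (rule sum.subset_diff[OF assms(1)], simp)
  moreover have "sum f ({0..<v} - C) = sum f ({0..<v} - C - {x}) + sum f {x}"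
    by (rule sum.subset_diff, use assms in auto)
  ultimately show ?thesis by simp
qed


lemma alg_I3: fixes r s k m c :: real
  assumes "m = k + r*s" "s*(s-r) = k*(1+r)" "c*m = -s*(k-r)"
  shows "s*(c*(r*r+s) - (r*r + r*s + r - s*s)) = 0"
  using assms by (Groebner_Basis.algebra)


lemma alg_I4: fixes r s c a t :: real
  assumes "c*(r*r+s) = r*r + r*s + r - s*s" "a*(r*r+s) = r*(s+1)"
   "t*(r-s) = - s*a - r*c + 2*r*a"
  shows "(r-s)*(r*r+s)*(t*(r*r+s) - (r - r*r)) = 0"
  using assms by (Groebner_Basis.algebra)


lemma alg_I5: fixes r s k c a :: real
  assumes "k*(1+r) = s*(s-r)" 
   "c*(r*r+s) = r*r + r*s + r - s*s" "a*(r*r+s) = r*(s+1)"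
  shows "(1+r)*(r*r+s)*(r*r+s)*((s-k)*(c-a) - (c+1)*(s*c - a*(s-k))) = 0"
  using assms by (Groebner_Basis.algebra)

lemma alg_I6: fixes r s k c a :: real
  assumes "k*(1+r) = s*(s-r)" 
   "c*(r*r+s) = r*r + r*s + r - s*s" "a*(r*r+s) = r*(s+1)"
  shows "(1+r)*(r*r+s)*((s-k)*(1+a) - s*(c+1)) = 0"
  using assms by (Groebner_Basis.algebra)


lemma sum_ind_sub: assumes "C \<subseteq> A" "finite A" shows "(\<Sum>x\<in>A. if x \<in> C then 1 else 0 :: real) = real (card C)"
proof -
  have "(\<Sum>x\<in>A. if x \<in> C then 1 else 0 :: real) = real (card {x\<in>A. x\<in>C})" by (rule card_sum_ind[symmetric, OF assms(2)])
  also have "{x\<in>A. x\<in>C} = C" using assms(1) by blast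
  finally show ?thesis .
qed

lemma alg_I7: fixes r s c a t :: real
  assumes "c*(r*r+s) = r*r + r*s + r - s*s" "a*(r*r+s) = r*(s+1)" "t*(r*r+s) = r - r*r"
  shows "(r*r+s)*(r*r+s)*(t*(c-1) - a*(a-1)) = 0"
  using assms by (Groebner_Basis.algebra)


lemma alg_lam: fixes r s k l m :: real
  assumes "l = m + r + s" "m = k + r*s" "s*(s-r) = k*(1+r)"
  shows "(1 + r) * l = s*s + s*(r*r + r + 1) + r*r + r"
  using assms by (Groebner_Basis.algebra)


context
  fixes v :: nat and E :: "nat \<Rightarrow> nat \<Rightarrow> bool" and k lam mu :: nat and r s :: real
  assumes srg: "srg v E k lam mu"
    and R1: "r + s = real lam - real mu" and R2: "r * s = real mu - real k"
    and R4: "s * (s - r) = real k * (1 + r)"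
    and rpos: "0 < r" and rk: "r < real k" and sneg: "s < 0" and vpos: "0 < v"
begin

abbreviation e :: "nat \<Rightarrow> nat \<Rightarrow> real" where "e \<equiv> ind E"

lemma e_sym: "x < v \<Longrightarrow> y < v \<Longrightarrow> e x y = e y x" using ind_sym[OF srg] by blast
lemma e_irr: "x < v \<Longrightarrow> e x x = 0" using ind_irr[OF srg] by blast
lemma e_sq: "e x y * e x y = e x y" by (rule ind_sq)
lemma e_nonneg: "e x y \<ge> 0" by (simp add: ind_def)

lemma QQ: assumes "y < v" "y' < v"
  shows "(\<Sum>w\<in>{0..<v}. e w y * e w y') = real mu + (real lam - real mu) * e y y' + (if y = y' then real k - real mu else 0)"
proof -
  have "(\<Sum>w\<in>{0..<v}. e w y * e w y') = (\<Sum>w\<in>{0..<v}. e y w * e y' w)"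
    by (intro sum.cong refl) (metis assms atLeastLessThan_iff e_sym)
  also have "\<dots> = real mu + (real lam - real mu) * e y y' + (if y = y' then real k - real mu else 0)"
    using srg_Q[OF srg assms] by simp
  finally show ?thesis .
qed

lemma cnt: "real k * real k = real k + real lam * real k + real mu * (real v - 1 - real k)"
proof -
  have x: "0 < v" by (rule vpos)
  have "(\<Sum>z\<in>{0..<v}. \<Sum>y\<in>{0..<v}. e 0 y * e y z) = (\<Sum>y\<in>{0..<v}. \<Sum>z\<in>{0..<v}. e 0 y * e y z)"
    by (rule sum.swap)
  also have "\<dots> = (\<Sum>y\<in>{0..<v}. e 0 y * real k)"
    by (intro sum.cong refl) (simp add: sum_distrib_left[symmetric] srg_deg[OF srg])
  also have "\<dots> = (\<Sum>y\<in>{0..<v}. e 0 y) * real k" by (simp add: sum_distrib_right)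
  also have "(\<Sum>y\<in>{0..<v}. e 0 y) = real k" using srg_deg[OF srg x] by simp
  finally have 1: "(\<Sum>z\<in>{0..<v}. \<Sum>y\<in>{0..<v}. e 0 y * e y z) = real k * real k" .
  have "(\<Sum>z\<in>{0..<v}. \<Sum>y\<in>{0..<v}. e 0 y * e y z) = (\<Sum>z\<in>{0..<v}. \<Sum>y\<in>{0..<v}. e y 0 * e y z)"
    by (intro sum.cong refl) (metis atLeastLessThan_iff e_sym x)
  also have "\<dots> = (\<Sum>z\<in>{0..<v}. real mu + (real lam - real mu) * e 0 z + (if 0 = z then real k - real mu else 0))"
    by (intro sum.cong refl) (simp add: QQ x)
  also have "\<dots> = real v * real mu + (real lam - real mu) * real k + (real k - real mu)"
    using x by (simp add: sum.distrib sum_distrib_left[symmetric] srg_deg[OF srg x] sum.delta)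
  finally show ?thesis using 1 by (simp add: algebra_simps)
qed

lemma muv: "real mu * real v = (real k - r) * (real k - s)"
proof -
  have "(real k - r) * (real k - s) = real k * real k - real k * (r + s) + r * s" by (simp add: algebra_simps)
  also have "\<dots> = real k * real k - real k * (real lam - real mu) + (real mu - real k)" using R1 R2 by simp
  finally show ?thesis using cnt by (simp add: algebra_simps)
qed

lemma mu_pos: "real mu > 0"
proof -
  have "(real k - r) * (real k - s) > 0" using rk sneg by (simp add: mult_pos_pos)
  then have "real mu * real v > 0" using muv by simp
  then show ?thesis using vpos by (simp add: zero_less_mult_iff)
qed

lemma cocl_fin: "coclique v E C \<Longrightarrow> finite C"
  unfolding coclique_def using finite_subset by blast

lemma cocl_sub: "coclique v E C \<Longrightarrow> x \<in> C \<Longrightarrow> x < v"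
  unfolding coclique_def by auto

lemma e_cocl: "coclique v E C \<Longrightarrow> x \<in> C \<Longrightarrow> y \<in> C \<Longrightarrow> e x y = 0"
  unfolding coclique_def ind_def by auto

lemma sum_deg_C: assumes C: "coclique v E C"
  shows "(\<Sum>x\<in>{0..<v}. \<Sum>y\<in>C. e x y) = real (card C) * real k"
proof -
  have "(\<Sum>x\<in>{0..<v}. \<Sum>y\<in>C. e x y) = (\<Sum>y\<in>C. \<Sum>x\<in>{0..<v}. e x y)" by (rule sum.swap)
  also have "\<dots> = (\<Sum>y\<in>C. real k)"
    by (intro sum.cong refl) (simp add: srg_deg'[OF srg] cocl_sub[OF C])
  finally show ?thesis by simp
qed

lemma sum_sq_C: assumes C: "coclique v E C"
  shows "(\<Sum>x\<in>{0..<v}. (\<Sum>y\<in>C. e x y) * (\<Sum>y\<in>C. e x y)) = real (card C) * (real (card C) * real mu + real k - real mu)"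
proof -
  have fC: "finite C" by (rule cocl_fin[OF C])
  have "(\<Sum>x\<in>{0..<v}. (\<Sum>y\<in>C. e x y) * (\<Sum>y\<in>C. e x y)) = (\<Sum>x\<in>{0..<v}. \<Sum>y\<in>C. \<Sum>y'\<in>C. e x y * e x y')"
    by (simp add: sum_product)
  also have "\<dots> = (\<Sum>y\<in>C. \<Sum>x\<in>{0..<v}. \<Sum>y'\<in>C. e x y * e x y')" by (rule sum.swap)
  also have "\<dots> = (\<Sum>y\<in>C. \<Sum>y'\<in>C. \<Sum>x\<in>{0..<v}. e x y * e x y')" by (intro sum.cong refl sum.swap)
  also have "\<dots> = (\<Sum>y\<in>C. \<Sum>y'\<in>C. real mu + (if y = y' then real k - real mu else 0))"
    by (intro sum.cong refl) (simp add: QQ cocl_sub[OF C] e_cocl[OF C])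
  also have "\<dots> = (\<Sum>y\<in>C. real (card C) * real mu + (real k - real mu))"
    by (intro sum.cong refl) (simp add: sum.distrib fC)
  finally show ?thesis by (simp add: algebra_simps)
qed

lemma D1: assumes C: "coclique v E C" and cC: "real (card C) * (s - real k) = real v * s"
    and x: "x < v" "x \<notin> C"
  shows "(\<Sum>y\<in>C. e x y) = - s"
proof -
  define n where "n x = (\<Sum>y\<in>C. e x y)" for x
  define c where "c = real (card C)"
  have fC: "finite C" by (rule cocl_fin[OF C])
  have sub: "C \<subseteq> {0..<v}" using cocl_sub[OF C] by auto
  have n0: "n x = 0" if "x \<in> C" for x unfolding n_def by (rule sum.neutral) (simp add: e_cocl[OF C that])
  have S1: "(\<Sum>x\<in>{0..<v}. n x) = c * real k" unfolding n_def c_def by (rule sum_deg_C[OF C])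
  have S2: "(\<Sum>x\<in>{0..<v}. n x * n x) = c * (c * real mu + real k - real mu)"
    unfolding n_def c_def by (rule sum_sq_C[OF C])
  have cV: "card ({0..<v} - C) = v - card C" using sub fC by (simp add: card_Diff_subset)
  have cle: "card C \<le> v" using sub by (metis card_atLeastLessThan card_mono finite_atLeastLessThan diff_zero)
  have "(\<Sum>x\<in>{0..<v}. (n x + s) * (n x + s)) = (\<Sum>x\<in>{0..<v}. n x * n x) + 2 * s * (\<Sum>x\<in>{0..<v}. n x) + real v * (s * s)"
    by (simp add: algebra_simps sum.distrib sum_distrib_left)
  moreover have "(\<Sum>x\<in>{0..<v}. (n x + s) * (n x + s)) = (\<Sum>x\<in>{0..<v} - C. (n x + s) * (n x + s)) + (\<Sum>x\<in>C. (n x + s) * (n x + s))"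
    by (rule sum.subset_diff[OF sub], simp)
  moreover have "(\<Sum>x\<in>C. (n x + s) * (n x + s)) = c * (s * s)" unfolding c_def by (simp add: n0)
  ultimately have T: "(\<Sum>x\<in>{0..<v} - C. (n x + s) * (n x + s)) = c * (c * real mu + real k - real mu) + 2 * s * (c * real k) + (real v - c) * (s * s)"
    unfolding S1 S2 by (simp add: algebra_simps)
  have hc: "c * (s - real k) = real v * s" using cC unfolding c_def .
  have skn: "s - real k \<noteq> 0" using sneg rk rpos by linarith
  have P1: "c * real mu = - s * (real k - r)" by (rule alg_P1[OF hc muv skn])
  have "c * (c * real mu + real k - real mu) + 2 * s * (c * real k) + (real v - c) * (s * s) = 0"
    by (rule alg_I1[OF R2 P1 hc])
  with T have Z: "(\<Sum>x\<in>{0..<v} - C. (n x + s) * (n x + s)) = 0" by simp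
  have "\<forall>x\<in>{0..<v} - C. (n x + s) * (n x + s) = 0"
    using Z sum_nonneg_eq_0_iff[of "{0..<v} - C" "\<lambda>x. (n x + s) * (n x + s)"] by simp
  then have "(n x + s) * (n x + s) = 0" using x by simp
  then show ?thesis unfolding n_def by simp
qed

lemma K: assumes C: "coclique v E C" and cC: "real (card C) * (s - real k) = real v * s"
    and x: "x < v" "x \<notin> C" and w: "w < v" "w \<notin> C" and xw: "x \<noteq> w"
  shows "(\<Sum>y\<in>C. e x y * e w y) = - r * r - s - r * e x w"
proof -
  define W where "W = {0..<v} - C - {x}"
  define T where "T w = (\<Sum>y\<in>C. e x y * e w y)" for w
  define c where "c = real (card C)"
  define a0 where "a0 = - r * r - s"
  have fC: "finite C" by (rule cocl_fin[OF C])
  have sub: "C \<subseteq> {0..<v}" using cocl_sub[OF C] by auto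
  have fW: "finite W" unfolding W_def by simp
  have nx: "(\<Sum>y\<in>C. e x y) = - s" by (rule D1[OF C cC x])
  have nx2: "(\<Sum>y\<in>C. e x y * e x y) = - s" using nx by (simp add: e_sq)
  have dc: "sum f {0..<v} = sum f W + sum f C + f x" for f :: "nat \<Rightarrow> real"
    unfolding W_def by (rule decomp3[OF sub x])
  have ha: "(\<Sum>w\<in>W. e w y) = real k - e x y" if y: "y \<in> C" for y
  proof -
    have "real k = (\<Sum>w\<in>{0..<v}. e w y)" using srg_deg'[OF srg cocl_sub[OF C y], where 'a=real] by simp
    also have "\<dots> = (\<Sum>w\<in>W. e w y) + (\<Sum>w\<in>C. e w y) + e x y" by (rule dc)
    also have "(\<Sum>w\<in>C. e w y) = 0" by (rule sum.neutral) (simp add: e_cocl[OF C _ y])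
    finally show ?thesis by simp
  qed
  have hb: "(\<Sum>w\<in>W. e x w * e w y) = real mu + (real lam - real mu) * e x y" if y: "y \<in> C" for y
  proof -
    have yv: "y < v" by (rule cocl_sub[OF C y])
    have xy: "x \<noteq> y" using x y by auto
    have "(\<Sum>w\<in>{0..<v}. e x w * e w y) = (\<Sum>w\<in>{0..<v}. e w x * e w y)"
      by (intro sum.cong refl) (metis atLeastLessThan_iff e_sym x(1))
    also have "\<dots> = real mu + (real lam - real mu) * e x y" using QQ[OF x(1) yv] xy by simp
    finally have 1: "(\<Sum>w\<in>{0..<v}. e x w * e w y) = real mu + (real lam - real mu) * e x y" .
    have "(\<Sum>w\<in>{0..<v}. e x w * e w y) = (\<Sum>w\<in>W. e x w * e w y) + (\<Sum>w\<in>C. e x w * e w y) + e x x * e x y" by (rule dc)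
    moreover have "(\<Sum>w\<in>C. e x w * e w y) = 0" by (rule sum.neutral) (simp add: e_cocl[OF C _ y])
    moreover have "e x x = 0" by (rule e_irr[OF x(1)])
    ultimately show ?thesis using 1 by simp
  qed
  have hc: "(\<Sum>w\<in>W. e w y * e w y') = real mu + (if y = y' then real k - real mu else 0) - e x y * e x y'"
    if y: "y \<in> C" and y': "y' \<in> C" for y y'
  proof -
    have "(\<Sum>w\<in>{0..<v}. e w y * e w y') = real mu + (if y = y' then real k - real mu else 0)"
      using QQ[OF cocl_sub[OF C y] cocl_sub[OF C y']] e_cocl[OF C y y'] by simp
    moreover have "(\<Sum>w\<in>{0..<v}. e w y * e w y') = (\<Sum>w\<in>W. e w y * e w y') + (\<Sum>w\<in>C. e w y * e w y') + e x y * e x y'" by (rule dc)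
    moreover have "(\<Sum>w\<in>C. e w y * e w y') = 0" by (rule sum.neutral) (simp add: e_cocl[OF C _ y])
    ultimately show ?thesis by simp
  qed
  have hd: "(\<Sum>w\<in>W. e x w) = real k + s"
  proof -
    have "real k = (\<Sum>w\<in>{0..<v}. e x w)" using srg_deg[OF srg x(1), where 'a=real] by simp
    also have "\<dots> = (\<Sum>w\<in>W. e x w) + (\<Sum>w\<in>C. e x w) + e x x" by (rule dc)
    finally show ?thesis using nx e_irr[OF x(1)] by simp
  qed
  have cW: "real (card W) = real v - c - 1"
  proof -
    have "card W = card ({0..<v} - C) - 1" unfolding W_def using x by (simp add: card_Diff_singleton)
    moreover have "card ({0..<v} - C) = v - card C" using sub fC by (simp add: card_Diff_subset)
    moreover have "card C < v" using sub x
      by (metis card_atLeastLessThan card_subset_eq diff_zero finite_atLeastLessThan le_neq_implies_less card_mono atLeastLessThan_iff zero_le)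
    ultimately show ?thesis unfolding c_def by (simp add: of_nat_diff)
  qed
  have ST: "(\<Sum>w\<in>W. T w) = - s * (real k - 1)"
  proof -
    have "(\<Sum>w\<in>W. T w) = (\<Sum>y\<in>C. \<Sum>w\<in>W. e x y * e w y)" unfolding T_def by (rule sum.swap)
    also have "\<dots> = (\<Sum>y\<in>C. e x y * (real k - e x y))"
      by (intro sum.cong refl) (simp add: sum_distrib_left[symmetric] ha)
    also have "\<dots> = real k * (\<Sum>y\<in>C. e x y) - (\<Sum>y\<in>C. e x y * e x y)"
      by (simp add: algebra_simps sum_subtractf sum_distrib_left)
    finally show ?thesis using nx nx2 by (simp add: algebra_simps)
  qed
  have SeT: "(\<Sum>w\<in>W. e x w * T w) = - s * real lam"
  proof -
    have "(\<Sum>w\<in>W. e x w * T w) = (\<Sum>w\<in>W. \<Sum>y\<in>C. e x y * (e x w * e w y))"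
      unfolding T_def by (simp add: sum_distrib_left algebra_simps)
    also have "\<dots> = (\<Sum>y\<in>C. \<Sum>w\<in>W. e x y * (e x w * e w y))" by (rule sum.swap)
    also have "\<dots> = (\<Sum>y\<in>C. e x y * (real mu + (real lam - real mu) * e x y))"
      by (intro sum.cong refl) (simp add: sum_distrib_left[symmetric] hb)
    also have "\<dots> = (\<Sum>y\<in>C. real mu * e x y + (real lam - real mu) * (e x y * e x y))"
      by (intro sum.cong refl) (simp add: algebra_simps)
    also have "\<dots> = real mu * (\<Sum>y\<in>C. e x y) + (real lam - real mu) * (\<Sum>y\<in>C. e x y * e x y)"
      by (simp add: sum.distrib sum_distrib_left)
    finally show ?thesis using nx nx2 by (simp add: algebra_simps)
  qed
  have ST2: "(\<Sum>w\<in>W. T w * T w) = real mu * s * s - s * (real k - real mu) - s * s"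
  proof -
    have "(\<Sum>w\<in>W. T w * T w) = (\<Sum>w\<in>W. \<Sum>y\<in>C. \<Sum>y'\<in>C. (e x y * e x y') * (e w y * e w y'))"
      unfolding T_def by (simp add: sum_product algebra_simps)
    also have "\<dots> = (\<Sum>y\<in>C. \<Sum>w\<in>W. \<Sum>y'\<in>C. (e x y * e x y') * (e w y * e w y'))" by (rule sum.swap)
    also have "\<dots> = (\<Sum>y\<in>C. \<Sum>y'\<in>C. \<Sum>w\<in>W. (e x y * e x y') * (e w y * e w y'))" by (intro sum.cong refl sum.swap)
    also have "\<dots> = (\<Sum>y\<in>C. \<Sum>y'\<in>C. (e x y * e x y') * (real mu + (if y = y' then real k - real mu else 0) - e x y * e x y'))"
      by (intro sum.cong refl) (simp add: sum_distrib_left[symmetric] hc)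
    also have "\<dots> = (\<Sum>y\<in>C. \<Sum>y'\<in>C. real mu * (e x y * e x y') + (if y = y' then (real k - real mu) * e x y else 0) - e x y * e x y')"
    proof (intro sum.cong refl)
      fix y y' assume "y \<in> C" "y' \<in> C"
      have "(e x y * e x y') * (e x y * e x y') = e x y * e x y'"
        by (metis e_sq mult.assoc mult.commute)
      then show "(e x y * e x y') * (real mu + (if y = y' then real k - real mu else 0) - e x y * e x y')
         = real mu * (e x y * e x y') + (if y = y' then (real k - real mu) * e x y else 0) - e x y * e x y'"
        by (auto simp: algebra_simps e_sq)
    qed
    also have "\<dots> = real mu * (\<Sum>y\<in>C. \<Sum>y'\<in>C. e x y * e x y') + (\<Sum>y\<in>C. \<Sum>y'\<in>C. (if y = y' then (real k - real mu) * e x y else 0)) - (\<Sum>y\<in>C. \<Sum>y'\<in>C. e x y * e x y')"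
      by (simp add: sum.distrib sum_subtractf sum_distrib_left)
    also have "(\<Sum>y\<in>C. \<Sum>y'\<in>C. e x y * e x y') = (\<Sum>y\<in>C. e x y) * (\<Sum>y\<in>C. e x y)"
      by (simp add: sum_product)
    also have "(\<Sum>y\<in>C. \<Sum>y'\<in>C. (if y = y' then (real k - real mu) * e x y else 0)) = (\<Sum>y\<in>C. (real k - real mu) * e x y)"
      by (intro sum.cong refl) (simp add: fC)
    also have "\<dots> = (real k - real mu) * (\<Sum>y\<in>C. e x y)" by (simp add: sum_distrib_left)
    finally show ?thesis using nx by (simp add: algebra_simps)
  qed
  define b where "b w = a0 - r * e x w" for w
  have Sb: "(\<Sum>w\<in>W. T w * b w) = a0 * (- s * (real k - 1)) - r * (- s * real lam)"
  proof -
    have "(\<Sum>w\<in>W. T w * b w) = (\<Sum>w\<in>W. a0 * T w - r * (e x w * T w))"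
      unfolding b_def by (intro sum.cong refl) (simp add: algebra_simps)
    also have "\<dots> = a0 * (\<Sum>w\<in>W. T w) - r * (\<Sum>w\<in>W. e x w * T w)"
      by (simp add: sum_subtractf sum_distrib_left)
    finally show ?thesis using ST SeT by simp
  qed
  have Sb2: "(\<Sum>w\<in>W. b w * b w) = a0 * a0 * (real v - c - 1) + (r * r - 2 * a0 * r) * (real k + s)"
  proof -
    have "(\<Sum>w\<in>W. b w * b w) = (\<Sum>w\<in>W. a0 * a0 + (r * r - 2 * a0 * r) * e x w)"
      unfolding b_def by (intro sum.cong refl) (simp add: algebra_simps e_sq)
    also have "\<dots> = a0 * a0 * real (card W) + (r * r - 2 * a0 * r) * (\<Sum>w\<in>W. e x w)"
      by (simp add: sum.distrib sum_distrib_left)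
    finally show ?thesis using hd cW by simp
  qed
  have tot: "(\<Sum>w\<in>W. (T w - b w) * (T w - b w)) = (\<Sum>w\<in>W. T w * T w) - 2 * (\<Sum>w\<in>W. T w * b w) + (\<Sum>w\<in>W. b w * b w)"
    by (simp add: algebra_simps sum.distrib sum_subtractf sum_distrib_left)
  have skn: "s - real k \<noteq> 0" using sneg rk rpos by linarith
  have hcc: "c * (s - real k) = real v * s" using cC unfolding c_def .
  have P1: "c * real mu = - s * (real k - r)" by (rule alg_P1[OF hcc muv skn])
  have P2: "real mu * (real v - c) = real k * (real k - r)" using P1 muv by (simp add: algebra_simps)
  have R1': "real lam = real mu + r + s" using R1 by simp
  have R2': "real mu = real k + r * s" using R2 by simp
  have R4': "s * (s - r) = real k * (1 + r)" by (rule R4)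
  have I: "real mu * (real mu * s * s - s * (real k - real mu) - s * s + 2 * (- r * r - s) * s * (real k - 1) - 2 * r * s * real lam
     + (- r * r - s) * (- r * r - s) * (real v - c - 1) + (r * r - 2 * (- r * r - s) * r) * (real k + s)) = 0"
    by (rule alg_I2[OF R1' R2' R4' P2 P1])
  have "(\<Sum>w\<in>W. (T w - b w) * (T w - b w)) = 0"
  proof -
    have "(\<Sum>w\<in>W. (T w - b w) * (T w - b w)) = real mu * s * s - s * (real k - real mu) - s * s + 2 * (- r * r - s) * s * (real k - 1) - 2 * r * s * real lam
     + (- r * r - s) * (- r * r - s) * (real v - c - 1) + (r * r - 2 * (- r * r - s) * r) * (real k + s)"
      unfolding tot ST2 Sb Sb2 a0_def by (simp add: algebra_simps)
    also have "\<dots> = 0" using I mu_pos by simp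
    finally show ?thesis .
  qed
  then have "\<forall>w\<in>W. (T w - b w) * (T w - b w) = 0"
    using sum_nonneg_eq_0_iff[OF fW, of "\<lambda>w. (T w - b w) * (T w - b w)"] by simp
  moreover have "w \<in> W" unfolding W_def using w xw by auto
  ultimately have "T w = b w" by simp
  then show ?thesis unfolding T_def b_def a0_def by simp
qed

lemma card_E1: "finite A \<Longrightarrow> real (card {y\<in>A. E y z}) = (\<Sum>y\<in>A. e y z)"
  unfolding ind_def by (rule card_sum_ind)

lemma card_E2: "finite A \<Longrightarrow> real (card {z\<in>A. E y z \<and> E y' z}) = (\<Sum>z\<in>A. e y z * e y' z)"
proof -
  assume "finite A"
  then have "real (card {z\<in>A. E y z \<and> E y' z}) = (\<Sum>z\<in>A. if E y z \<and> E y' z then 1 else 0)" by (rule card_sum_ind)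
  also have "\<dots> = (\<Sum>z\<in>A. e y z * e y' z)" by (intro sum.cong refl) (simp add: ind_def)
  finally show ?thesis .
qed

lemma dl_card_eq: assumes "real (card Y) * (s - real k) = real v * s" "real (card Z) * (s - real k) = real v * s"
  shows "card Y = card Z"
proof -
  have sk: "s - real k \<noteq> 0" using sneg rk rpos by linarith
  have "real (card Y) * (s - real k) = real (card Z) * (s - real k)" using assms by simp
  then have "real (card Y) = real (card Z)" using sk by simp
  then show ?thesis by simp
qed

lemma sum_YZ: "finite Y \<Longrightarrow> (\<Sum>y\<in>Y. f y) = (\<Sum>y\<in>Y - Z. f y) + (\<Sum>y\<in>Y \<inter> Z. (f y :: real))"
proof -
  assume fY: "finite Y"
  have "(\<Sum>y\<in>Y. f y) = (\<Sum>y\<in>(Y - Z) \<union> (Y \<inter> Z). f y)" by (simp add: Un_Diff_Int)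
  also have "\<dots> = (\<Sum>y\<in>Y - Z. f y) + (\<Sum>y\<in>Y \<inter> Z. f y)" by (rule sum.union_disjoint) (use fY in auto)
  finally show ?thesis .
qed

lemma card_YZ: "finite Y \<Longrightarrow> card Y = card (Y - Z) + card (Y \<inter> Z)"
proof -
  assume fY: "finite Y"
  have "card Y = card ((Y - Z) \<union> (Y \<inter> Z))" by (simp add: Un_Diff_Int)
  also have "\<dots> = card (Y - Z) + card (Y \<inter> Z)" by (rule card_Un_disjoint) (use fY in auto)
  finally show ?thesis .
qed

lemma PAIR:
  assumes Y: "coclique v E Y" "real (card Y) * (s - real k) = real v * s"
    and Z: "coclique v E Z" "real (card Z) * (s - real k) = real v * s"
    and YZ: "Y \<noteq> Z"
  shows "real (card (Y - Z)) * (- r * r - s) = s * s - r * r"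
    "- r * r - s \<noteq> 0"
    "\<forall>z\<in>Z - Y. {y\<in>Y. E y z} \<subseteq> Y - Z \<and> real (card {y\<in>Y. E y z}) = - s"
    "inj_on (\<lambda>z. {y\<in>Y. E y z}) (Z - Y)"
    "\<forall>y\<in>Y - Z. \<forall>y'\<in>Y - Z. y \<noteq> y' \<longrightarrow> real (card {z\<in>Z - Y. E y z \<and> E y' z}) = - r * r - s"
    "card (Z - Y) = card (Y - Z)"
    "card (Y - Z) \<ge> 1"
proof -
  have fY: "finite Y" by (rule cocl_fin[OF Y(1)])
  have fZ: "finite Z" by (rule cocl_fin[OF Z(1)])
  have cYZ: "card Y = card Z" by (rule dl_card_eq[OF Y(2) Z(2)])
  have cY: "card Y = card (Y - Z) + card (Y \<inter> Z)" by (rule card_YZ[OF fY])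
  have cZ: "card Z = card (Z - Y) + card (Y \<inter> Z)" using card_YZ[OF fZ, of Y] by (simp add: Int_commute)
  show cZY: "card (Z - Y) = card (Y - Z)" using cY cZ cYZ by simp
  show n1: "card (Y - Z) \<ge> 1"
  proof (rule ccontr)
    assume "\<not> 1 \<le> card (Y - Z)"
    then have "card (Y - Z) = 0" by simp
    then have "Y - Z = {}" using fY by simp
    moreover have "Z - Y = {}" using cZY \<open>card (Y - Z) = 0\<close> fZ by simp
    ultimately show False using YZ by blast
  qed
  have blk: "{y\<in>Y. E y z} \<subseteq> Y - Z \<and> real (card {y\<in>Y. E y z}) = - s" if z: "z \<in> Z - Y" for z
  proof
    show "{y\<in>Y. E y z} \<subseteq> Y - Z" using Z(1) z unfolding coclique_def by auto
    have zv: "z < v" using cocl_sub[OF Z(1)] z by auto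
    have "real (card {y\<in>Y. E y z}) = (\<Sum>y\<in>Y. e y z)" by (rule card_E1[OF fY])
    also have "\<dots> = (\<Sum>y\<in>Y. e z y)"
    proof (intro sum.cong refl)
      fix y assume "y \<in> Y"
      then have "y < v" by (rule cocl_sub[OF Y(1)])
      then show "e y z = e z y" using e_sym zv by blast
    qed
    also have "\<dots> = - s" using D1[OF Y zv] z by simp
    finally show "real (card {y\<in>Y. E y z}) = - s" .
  qed
  then show "\<forall>z\<in>Z - Y. {y\<in>Y. E y z} \<subseteq> Y - Z \<and> real (card {y\<in>Y. E y z}) = - s" by blast
  have inter: "real (card ({y\<in>Y. E y z} \<inter> {y\<in>Y. E y z'})) = - r * r - s"
    if z: "z \<in> Z - Y" and z': "z' \<in> Z - Y" and zz: "z \<noteq> z'" for z z'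
  proof -
    have zv: "z < v" and z'v: "z' < v" using cocl_sub[OF Z(1)] z z' by auto
    have sy: "\<forall>y\<in>Y. E y z = E z y \<and> E y z' = E z' y"
      using srg_sym[OF srg] zv z'v cocl_sub[OF Y(1)] by blast
    have "{y\<in>Y. E y z} \<inter> {y\<in>Y. E y z'} = {y\<in>Y. E z y \<and> E z' y}" using sy by blast
    then have "real (card ({y\<in>Y. E y z} \<inter> {y\<in>Y. E y z'})) = (\<Sum>y\<in>Y. e z y * e z' y)"
      using card_E2[OF fY, of z z'] by simp
    also have "\<dots> = - r * r - s - r * e z z'" using K[OF Y zv _ z'v _ zz] z z' by simp
    also have "e z z' = 0" using e_cocl[OF Z(1)] z z' by simp
    finally show ?thesis by simp
  qed
  show inj: "inj_on (\<lambda>z. {y\<in>Y. E y z}) (Z - Y)"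
  proof (rule inj_onI, rule ccontr)
    fix z z' assume z: "z \<in> Z - Y" and z': "z' \<in> Z - Y" and eq: "{y\<in>Y. E y z} = {y\<in>Y. E y z'}" and zz: "z \<noteq> z'"
    have "real (card ({y\<in>Y. E y z} \<inter> {y\<in>Y. E y z'})) = - s" using eq blk[OF z] by simp
    moreover have "real (card ({y\<in>Y. E y z} \<inter> {y\<in>Y. E y z'})) = - r * r - s" by (rule inter[OF z z' zz])
    ultimately show False using rpos by simp
  qed
  have pr: "real (card {z\<in>Z - Y. E y z \<and> E y' z}) = - r * r - s"
    if y: "y \<in> Y - Z" and y': "y' \<in> Y - Z" and yy: "y \<noteq> y'" for y y'
  proof -
    have yv: "y < v" and y'v: "y' < v" using cocl_sub[OF Y(1)] y y' by auto
    have "real (card {z\<in>Z - Y. E y z \<and> E y' z}) = (\<Sum>z\<in>Z - Y. e y z * e y' z)" by (rule card_E2, simp add: fZ)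
    also have "\<dots> = (\<Sum>z\<in>Z. e y z * e y' z)"
    proof -
      have "(\<Sum>z\<in>Z. e y z * e y' z) = (\<Sum>z\<in>Z - Y. e y z * e y' z) + (\<Sum>z\<in>Z \<inter> Y. e y z * e y' z)" by (rule sum_YZ[OF fZ])
      moreover have "(\<Sum>z\<in>Z \<inter> Y. e y z * e y' z) = 0" by (rule sum.neutral) (use e_cocl[OF Y(1)] y in auto)
      ultimately show ?thesis by simp
    qed
    also have "\<dots> = - r * r - s - r * e y y'"
      using K[OF Z yv _ y'v _ yy] y y' by simp
    also have "e y y' = 0" using e_cocl[OF Y(1)] y y' by simp
    finally show ?thesis by simp
  qed
  then show "\<forall>y\<in>Y - Z. \<forall>y'\<in>Y - Z. y \<noteq> y' \<longrightarrow> real (card {z\<in>Z - Y. E y z \<and> E y' z}) = - r * r - s" by blast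
  define n where "n = real (card (Y - Z))"
  define a0 where "a0 = - r * r - s"
  have self: "(\<Sum>z\<in>Z - Y. e y z * e y z) = - s" if y: "y \<in> Y - Z" for y
  proof -
    have yv: "y < v" using cocl_sub[OF Y(1)] y by auto
    have "(\<Sum>z\<in>Z. e y z) = (\<Sum>z\<in>Z - Y. e y z) + (\<Sum>z\<in>Z \<inter> Y. e y z)" by (rule sum_YZ[OF fZ])
    moreover have "(\<Sum>z\<in>Z \<inter> Y. e y z) = 0" by (rule sum.neutral) (use e_cocl[OF Y(1)] y in auto)
    moreover have "(\<Sum>z\<in>Z. e y z) = - s" using D1[OF Z yv] y by simp
    ultimately show ?thesis by (simp add: e_sq)
  qed
  have cnt1: "(\<Sum>z\<in>Z - Y. (\<Sum>y\<in>Y - Z. e y z) * (\<Sum>y\<in>Y - Z. e y z)) = n * (s * s)"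
  proof -
    have "(\<Sum>y\<in>Y - Z. e y z) = - s" if z: "z \<in> Z - Y" for z
    proof -
      have "(\<Sum>y\<in>Y. e y z) = (\<Sum>y\<in>Y - Z. e y z) + (\<Sum>y\<in>Y \<inter> Z. e y z)" by (rule sum_YZ[OF fY])
      moreover have "(\<Sum>y\<in>Y \<inter> Z. e y z) = 0" by (rule sum.neutral) (use e_cocl[OF Z(1)] z in auto)
      moreover have "(\<Sum>y\<in>Y. e y z) = - s" using blk[OF z] card_E1[OF fY, of z] by simp
      ultimately show ?thesis by simp
    qed
    then have "(\<Sum>z\<in>Z - Y. (\<Sum>y\<in>Y - Z. e y z) * (\<Sum>y\<in>Y - Z. e y z)) = (\<Sum>z\<in>Z - Y. s * s)" by simp
    then show ?thesis unfolding n_def using cZY by simp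
  qed
  have cnt2: "(\<Sum>z\<in>Z - Y. (\<Sum>y\<in>Y - Z. e y z) * (\<Sum>y\<in>Y - Z. e y z)) = n * (- s) + n * (n - 1) * a0"
  proof -
    have "(\<Sum>z\<in>Z - Y. (\<Sum>y\<in>Y - Z. e y z) * (\<Sum>y\<in>Y - Z. e y z)) = (\<Sum>z\<in>Z - Y. \<Sum>y\<in>Y - Z. \<Sum>y'\<in>Y - Z. e y z * e y' z)"
      by (simp add: sum_product)
    also have "\<dots> = (\<Sum>y\<in>Y - Z. \<Sum>z\<in>Z - Y. \<Sum>y'\<in>Y - Z. e y z * e y' z)" by (rule sum.swap)
    also have "\<dots> = (\<Sum>y\<in>Y - Z. \<Sum>y'\<in>Y - Z. \<Sum>z\<in>Z - Y. e y z * e y' z)" by (intro sum.cong refl sum.swap)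
    also have "\<dots> = (\<Sum>y\<in>Y - Z. \<Sum>y'\<in>Y - Z. a0 + (if y = y' then - s - a0 else 0))"
    proof (intro sum.cong refl)
      fix y y' assume y: "y \<in> Y - Z" and y': "y' \<in> Y - Z"
      show "(\<Sum>z\<in>Z - Y. e y z * e y' z) = a0 + (if y = y' then - s - a0 else 0)"
      proof (cases "y = y'")
        case True
        then show ?thesis using self[OF y] by simp
      next
        case False
        have "real (card {z\<in>Z - Y. E y z \<and> E y' z}) = (\<Sum>z\<in>Z - Y. e y z * e y' z)" by (rule card_E2, simp add: fZ)
        then show ?thesis using pr[OF y y' False] False unfolding a0_def by simp
      qed
    qed
    also have "\<dots> = (\<Sum>y\<in>Y - Z. n * a0 + (- s - a0))"
      by (intro sum.cong refl) (simp add: sum.distrib n_def fY)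
    also have "\<dots> = n * (n * a0 + (- s - a0))" unfolding n_def by simp
    finally show ?thesis by (simp add: algebra_simps)
  qed
  have np: "n > 0" using n1 unfolding n_def by simp
  from cnt1 cnt2 have "n * (s * s) = n * (- s + (n - 1) * a0)" by (simp add: algebra_simps)
  then have E1: "s * s = - s + (n - 1) * a0" using np by simp
  then show "real (card (Y - Z)) * (- r * r - s) = s * s - r * r" unfolding n_def[symmetric] a0_def[symmetric]
    by (simp add: algebra_simps a0_def)
  show "- r * r - s \<noteq> 0"
  proof
    assume a: "- r * r - s = 0"
    then have "s * s + s = 0" using E1 unfolding a0_def by simp
    then have "s * (s + 1) = 0" by (simp add: algebra_simps)
    then have s1: "s = -1" using sneg by simp
    then have "r * r = 1" using a by simp
    then have r1: "r = 1" using rpos by (metis abs_of_pos real_sqrt_abs real_sqrt_mult_self real_sqrt_one power2_eq_square)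
    have "real k * 2 = 2" using R4 s1 r1 by simp
    then have "real k = 1" by simp
    then show False using rk r1 by simp
  qed
qed

lemma CFORM: assumes Y: "coclique v E Y" "real (card Y) * (s - real k) = real v * s"
  shows "real (card Y) * (r * r + s) = r * r + r * s + r - s * s"
proof -
  have skn: "s - real k \<noteq> 0" using sneg rk rpos by linarith
  have P1: "real (card Y) * real mu = - s * (real k - r)" by (rule alg_P1[OF Y(2) muv skn])
  have R2': "real mu = real k + r * s" using R2 by simp
  have "s * (real (card Y) * (r * r + s) - (r * r + r * s + r - s * s)) = 0" by (rule alg_I3[OF R2' R4 P1])
  then show ?thesis using sneg by simp
qed

lemma AFORM: assumes Y: "coclique v E Y" "real (card Y) * (s - real k) = real v * s"
    and Z: "coclique v E Z" "real (card Z) * (s - real k) = real v * s" and YZ: "Y \<noteq> Z"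
  shows "real (card (Y \<inter> Z)) * (r * r + s) = r * (s + 1)"
proof -
  have "card Y = card (Y - Z) + card (Y \<inter> Z)" by (rule card_YZ[OF cocl_fin[OF Y(1)]])
  then have "real (card (Y \<inter> Z)) = real (card Y) - real (card (Y - Z))" by simp
  moreover have "real (card (Y - Z)) * (r * r + s) = r * r - s * s" using PAIR(1)[OF Y Z YZ] by (Groebner_Basis.algebra)
  ultimately show ?thesis using CFORM[OF Y] by (Groebner_Basis.algebra)
qed

lemma CPROP: assumes Y: "coclique v E Y" "real (card Y) * (s - real k) = real v * s"
    and Z: "coclique v E Z" "real (card Z) * (s - real k) = real v * s" and YZ: "Y \<noteq> Z"
    and w: "w < v" "w \<notin> Y" "w \<notin> Z"
  shows "(\<Sum>u\<in>Y \<inter> Z. e w u) = r"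
proof -
  have fY: "finite Y" by (rule cocl_fin[OF Y(1)])
  have fZ: "finite Z" by (rule cocl_fin[OF Z(1)])
  define p where "p = (\<Sum>u\<in>Y \<inter> Z. e w u)"
  define n where "n = real (card (Z - Y))"
  have na: "n * (- r * r - s) = s * s - r * r" using PAIR(1,6)[OF Y Z YZ] unfolding n_def by simp
  have wZY: "(\<Sum>z\<in>Z - Y. e w z) = - s - p"
  proof -
    have "(\<Sum>z\<in>Z. e w z) = (\<Sum>z\<in>Z - Y. e w z) + (\<Sum>z\<in>Z \<inter> Y. e w z)" by (rule sum_YZ[OF fZ])
    moreover have "(\<Sum>z\<in>Z. e w z) = - s" by (rule D1[OF Z w(1,3)])
    moreover have "Z \<inter> Y = Y \<inter> Z" by blast
    ultimately show ?thesis unfolding p_def by simp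
  qed
  have wYZ: "(\<Sum>y\<in>Y - Z. e w y) = - s - p"
  proof -
    have "(\<Sum>y\<in>Y. e w y) = (\<Sum>y\<in>Y - Z. e w y) + (\<Sum>y\<in>Y \<inter> Z. e w y)" by (rule sum_YZ[OF fY])
    moreover have "(\<Sum>y\<in>Y. e w y) = - s" by (rule D1[OF Y w(1,2)])
    ultimately show ?thesis unfolding p_def by simp
  qed
  have L1: "(\<Sum>z\<in>Z - Y. \<Sum>y\<in>Y. e w y * e z y) = n * (- r * r - s) - r * (- s - p)"
  proof -
    have "(\<Sum>z\<in>Z - Y. \<Sum>y\<in>Y. e w y * e z y) = (\<Sum>z\<in>Z - Y. (- r * r - s) - r * e w z)"
    proof (intro sum.cong refl)
      fix z assume z: "z \<in> Z - Y"
      have zv: "z < v" using cocl_sub[OF Z(1)] z by auto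
      have "w \<noteq> z" using z w by auto
      then show "(\<Sum>y\<in>Y. e w y * e z y) = (- r * r - s) - r * e w z" using K[OF Y w(1,2) zv] z by simp
    qed
    also have "\<dots> = n * (- r * r - s) - r * (\<Sum>z\<in>Z - Y. e w z)"
      unfolding n_def by (simp add: sum_subtractf sum_distrib_left)
    finally show ?thesis using wZY by simp
  qed
  have L2: "(\<Sum>z\<in>Z - Y. \<Sum>y\<in>Y. e w y * e z y) = - s * (- s - p)"
  proof -
    have "(\<Sum>z\<in>Z - Y. \<Sum>y\<in>Y. e w y * e z y) = (\<Sum>y\<in>Y. \<Sum>z\<in>Z - Y. e w y * e z y)" by (rule sum.swap)
    also have "\<dots> = (\<Sum>y\<in>Y. e w y * (\<Sum>z\<in>Z - Y. e z y))" by (simp add: sum_distrib_left)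
    also have "\<dots> = (\<Sum>y\<in>Y - Z. e w y * (\<Sum>z\<in>Z - Y. e z y)) + (\<Sum>y\<in>Y \<inter> Z. e w y * (\<Sum>z\<in>Z - Y. e z y))"
      by (rule sum_YZ[OF fY])
    also have "(\<Sum>y\<in>Y \<inter> Z. e w y * (\<Sum>z\<in>Z - Y. e z y)) = 0"
    proof (rule sum.neutral, rule ballI)
      fix y assume y: "y \<in> Y \<inter> Z"
      have "(\<Sum>z\<in>Z - Y. e z y) = 0" by (rule sum.neutral) (use e_cocl[OF Z(1)] y in auto)
      then show "e w y * (\<Sum>z\<in>Z - Y. e z y) = 0" by simp
    qed
    also have "(\<Sum>y\<in>Y - Z. e w y * (\<Sum>z\<in>Z - Y. e z y)) = (\<Sum>y\<in>Y - Z. e w y * (- s))"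
    proof (intro sum.cong refl)
      fix y assume y: "y \<in> Y - Z"
      have yv: "y < v" using cocl_sub[OF Y(1)] y by auto
      have "(\<Sum>z\<in>Z. e z y) = (\<Sum>z\<in>Z - Y. e z y) + (\<Sum>z\<in>Z \<inter> Y. e z y)" by (rule sum_YZ[OF fZ])
      moreover have "(\<Sum>z\<in>Z \<inter> Y. e z y) = 0" by (rule sum.neutral) (use e_cocl[OF Y(1)] y in auto)
      moreover have "(\<Sum>z\<in>Z. e z y) = (\<Sum>z\<in>Z. e y z)"
      proof (intro sum.cong refl)
        fix z assume "z \<in> Z"
        then have "z < v" by (rule cocl_sub[OF Z(1)])
        then show "e z y = e y z" using e_sym yv by blast
      qed
      moreover have "(\<Sum>z\<in>Z. e y z) = - s" using D1[OF Z yv] y by simp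
      ultimately show "e w y * (\<Sum>z\<in>Z - Y. e z y) = e w y * (- s)" by simp
    qed
    also have "\<dots> = - s * (\<Sum>y\<in>Y - Z. e w y)" by (simp add: sum_distrib_left mult.commute)
    finally show ?thesis using wYZ by simp
  qed
  from L1 L2 na have "p * (r - s) = r * (r - s)" by (simp add: algebra_simps)
  moreover have "r - s \<noteq> 0" using rpos sneg by simp
  ultimately have "p = r" by simp
  then show ?thesis unfolding p_def .
qed

lemma TRIPLE: assumes X: "coclique v E X" "real (card X) * (s - real k) = real v * s"
    and Y: "coclique v E Y" "real (card Y) * (s - real k) = real v * s"
    and Z: "coclique v E Z" "real (card Z) * (s - real k) = real v * s"
    and XY: "X \<noteq> Y" and XZ: "X \<noteq> Z" and YZ: "Y \<noteq> Z"
  shows "real (card (X \<inter> Y \<inter> Z)) * (r * r + s) = r - r * r"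
proof -
  have fX: "finite X" by (rule cocl_fin[OF X(1)])
  have fY: "finite Y" by (rule cocl_fin[OF Y(1)])
  have fZ: "finite Z" by (rule cocl_fin[OF Z(1)])
  have nz: "r * r + s \<noteq> 0" using PAIR(2)[OF Y Z YZ] by simp
  define a where "a = real (card (Y \<inter> Z))"
  define c where "c = real (card X)"
  define t where "t = real (card (X \<inter> Y \<inter> Z))"
  have aYZ: "a * (r * r + s) = r * (s + 1)" unfolding a_def by (rule AFORM[OF Y Z YZ])
  have aXY: "real (card (X \<inter> Y)) = a" using AFORM[OF X Y XY] aYZ nz
    by (metis mult_cancel_right)
  have aXZ: "real (card (X \<inter> Z)) = a" using AFORM[OF X Z XZ] aYZ nz
    by (metis mult_cancel_right)
  have cf: "c * (r * r + s) = r * r + r * s + r - s * s" unfolding c_def by (rule CFORM[OF X])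
  define W where "W = X - (Y \<union> Z)"
  have cW: "real (card W) = c - 2 * a + t"
  proof -
    have "card X = card (X - (Y \<union> Z)) + card (X \<inter> (Y \<union> Z))" by (rule card_YZ[OF fX])
    moreover have "X \<inter> (Y \<union> Z) = (X \<inter> Y) \<union> (X \<inter> Z)" by blast
    moreover have "card ((X \<inter> Y) \<union> (X \<inter> Z)) + card ((X \<inter> Y) \<inter> (X \<inter> Z)) = card (X \<inter> Y) + card (X \<inter> Z)"
      using card_Un_Int[of "X \<inter> Y" "X \<inter> Z"] fX by simp
    moreover have "(X \<inter> Y) \<inter> (X \<inter> Z) = X \<inter> Y \<inter> Z" by blast
    ultimately have "real (card W) + real (card (X \<inter> Y)) + real (card (X \<inter> Z)) = real (card X) + real (card (X \<inter> Y \<inter> Z))"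
      unfolding W_def by simp
    then show ?thesis using aXY aXZ unfolding c_def t_def by simp
  qed
  have L1: "(\<Sum>w\<in>W. \<Sum>u\<in>Y \<inter> Z. e w u) = r * real (card W)"
  proof -
    have "(\<Sum>w\<in>W. \<Sum>u\<in>Y \<inter> Z. e w u) = (\<Sum>w\<in>W. r)"
    proof (intro sum.cong refl)
      fix w assume w: "w \<in> W"
      have wv: "w < v" using cocl_sub[OF X(1)] w unfolding W_def by auto
      show "(\<Sum>u\<in>Y \<inter> Z. e w u) = r" by (rule CPROP[OF Y Z YZ wv]) (use w W_def in auto)
    qed
    then show ?thesis by simp
  qed
  have L2: "(\<Sum>w\<in>W. \<Sum>u\<in>Y \<inter> Z. e w u) = - s * (a - t)"
  proof -
    have "(\<Sum>w\<in>W. \<Sum>u\<in>Y \<inter> Z. e w u) = (\<Sum>u\<in>Y \<inter> Z. \<Sum>w\<in>W. e w u)" by (rule sum.swap)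
    also have "\<dots> = (\<Sum>u\<in>Y \<inter> Z. if u \<in> X then 0 else - s)"
    proof (intro sum.cong refl)
      fix u assume u: "u \<in> Y \<inter> Z"
      have uv: "u < v" using cocl_sub[OF Y(1)] u by auto
      show "(\<Sum>w\<in>W. e w u) = (if u \<in> X then 0 else - s)"
      proof (cases "u \<in> X")
        case True
        have "(\<Sum>w\<in>W. e w u) = 0" by (rule sum.neutral) (use e_cocl[OF X(1)] True W_def in auto)
        then show ?thesis using True by simp
      next
        case False
        have "(\<Sum>w\<in>X. e w u) = (\<Sum>w\<in>X - (Y \<union> Z). e w u) + (\<Sum>w\<in>X \<inter> (Y \<union> Z). e w u)" by (rule sum_YZ[OF fX])
        moreover have "(\<Sum>w\<in>X \<inter> (Y \<union> Z). e w u) = 0"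
        proof (rule sum.neutral, rule ballI)
          fix w assume w: "w \<in> X \<inter> (Y \<union> Z)"
          show "e w u = 0"
          proof (cases "w \<in> Y")
            case True then show ?thesis using e_cocl[OF Y(1)] u by simp
          next
            case False then have "w \<in> Z" using w by simp
            then show ?thesis using e_cocl[OF Z(1)] u by simp
          qed
        qed
        moreover have "(\<Sum>w\<in>X. e w u) = (\<Sum>w\<in>X. e u w)"
        proof (intro sum.cong refl)
          fix w assume "w \<in> X"
          then have "w < v" by (rule cocl_sub[OF X(1)])
          then show "e w u = e u w" using e_sym uv by blast
        qed
        moreover have "(\<Sum>w\<in>X. e u w) = - s" by (rule D1[OF X uv False])
        ultimately show ?thesis using False unfolding W_def by simp
      qed
    qed
    also have "\<dots> = - s * real (card (Y \<inter> Z - X))"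
    proof -
      have "(\<Sum>u\<in>Y \<inter> Z. if u \<in> X then 0 else - s) = (\<Sum>u\<in>Y \<inter> Z - X. - s)"
        by (rule sum.mono_neutral_cong_right) (use fY in auto)
      then show ?thesis by simp
    qed
    also have "real (card (Y \<inter> Z - X)) = a - t"
    proof -
      have "card (Y \<inter> Z) = card (Y \<inter> Z - X) + card (Y \<inter> Z \<inter> X)" by (rule card_YZ) (use fY in auto)
      moreover have "Y \<inter> Z \<inter> X = X \<inter> Y \<inter> Z" by blast
      ultimately show ?thesis unfolding a_def t_def by simp
    qed
    finally show ?thesis .
  qed
  from L1 L2 cW have "r * (c - 2 * a + t) = - s * (a - t)" by simp
  then have tt: "t * (r - s) = - s * a - r * c + 2 * r * a" by (simp add: algebra_simps)
  have "(r - s) * (r * r + s) * (t * (r * r + s) - (r - r * r)) = 0" by (rule alg_I4[OF cf aYZ tt])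
  moreover have "r - s \<noteq> 0" using rpos sneg by simp
  ultimately show ?thesis using nz unfolding t_def by simp
qed

lemma BOUND:
  assumes Dd: "\<forall>C\<in>D. coclique v E C \<and> real (card C) * (s - real k) = real v * s"
    and fD: "finite D" and Y: "Y \<in> D" and Z: "Z \<in> D" and YZ: "Y \<noteq> Z"
  shows "real (card D) \<le> real (card Y) + 1"
    "real (card D) = real (card Y) + 1 \<Longrightarrow> x < v \<Longrightarrow> real (card {C\<in>D. x \<in> C}) = 1 + real (card (Y \<inter> Z))"
proof -
  define c where "c = real (card Y)"
  define a where "a = real (card (Y \<inter> Z))"
  define N where "N = real (card D)"
  have Yd: "coclique v E Y" "real (card Y) * (s - real k) = real v * s" using Dd Y by auto
  have Zd: "coclique v E Z" "real (card Z) * (s - real k) = real v * s" using Dd Z by auto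
  have nz: "r * r + s \<noteq> 0" using PAIR(2)[OF Yd Zd YZ] by simp
  have cf: "c * (r * r + s) = r * r + r * s + r - s * s" unfolding c_def by (rule CFORM[OF Yd])
  have af: "a * (r * r + s) = r * (s + 1)" unfolding a_def by (rule AFORM[OF Yd Zd YZ])
  have cC: "real (card C) = c" if "C \<in> D" for C
    using dl_card_eq[of C Y] Dd that Yd unfolding c_def by auto
  have aC: "real (card (C \<inter> C')) = a" if "C \<in> D" "C' \<in> D" "C \<noteq> C'" for C C'
  proof -
    have "real (card (C \<inter> C')) * (r * r + s) = r * (s + 1)" by (rule AFORM) (use Dd that in auto)
    then show ?thesis using af nz by (metis mult_cancel_right)
  qed
  have hc: "c * (s - real k) = real v * s" using Yd(2) unfolding c_def .
  have ca: "c - a \<ge> 1"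
  proof -
    have "card Y = card (Y - Z) + card (Y \<inter> Z)" by (rule card_YZ[OF cocl_fin[OF Yd(1)]])
    then show ?thesis using PAIR(7)[OF Yd Zd YZ] unfolding c_def a_def by simp
  qed
  define d where "d x = (\<Sum>C\<in>D. if x \<in> C then 1 else 0 :: real)" for x
  have dcard: "d x = real (card {C\<in>D. x \<in> C})" for x unfolding d_def by (rule card_sum_ind[OF fD, symmetric])
  have Sd: "(\<Sum>x\<in>{0..<v}. d x) = N * c"
  proof -
    have "(\<Sum>x\<in>{0..<v}. d x) = (\<Sum>C\<in>D. \<Sum>x\<in>{0..<v}. if x \<in> C then 1 else 0 :: real)"
      unfolding d_def by (rule sum.swap)
    also have "\<dots> = (\<Sum>C\<in>D. c)"
    proof (intro sum.cong refl)
      fix C assume C: "C \<in> D"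
      have "coclique v E C" using Dd C by blast
      then have sub: "C \<subseteq> {0..<v}" unfolding coclique_def by blast
      have "(\<Sum>x\<in>{0..<v}. if x \<in> C then 1 else 0 :: real) = real (card C)"
        by (rule sum_ind_sub[OF sub], simp)
      then show "(\<Sum>x\<in>{0..<v}. if x \<in> C then 1 else 0 :: real) = c" using cC[OF C] by simp
    qed
    finally show ?thesis unfolding N_def by simp
  qed
  have Sd2: "(\<Sum>x\<in>{0..<v}. d x * d x) = N * (c + (N - 1) * a)"
  proof -
    have "(\<Sum>x\<in>{0..<v}. d x * d x) = (\<Sum>x\<in>{0..<v}. \<Sum>C\<in>D. \<Sum>C'\<in>D. (if x \<in> C then 1 else 0 :: real) * (if x \<in> C' then 1 else 0))"
      unfolding d_def by (simp add: sum_product)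
    also have "\<dots> = (\<Sum>C\<in>D. \<Sum>x\<in>{0..<v}. \<Sum>C'\<in>D. (if x \<in> C then 1 else 0 :: real) * (if x \<in> C' then 1 else 0))"
      by (rule sum.swap)
    also have "\<dots> = (\<Sum>C\<in>D. \<Sum>C'\<in>D. \<Sum>x\<in>{0..<v}. (if x \<in> C then 1 else 0 :: real) * (if x \<in> C' then 1 else 0))"
      by (intro sum.cong refl sum.swap)
    also have "\<dots> = (\<Sum>C\<in>D. \<Sum>C'\<in>D. a + (if C = C' then c - a else 0))"
    proof (intro sum.cong refl)
      fix C C' assume C: "C \<in> D" and C': "C' \<in> D"
      have "coclique v E C" using Dd C by blast
      then have sub: "C \<subseteq> {0..<v}" unfolding coclique_def by blast
      have "(\<Sum>x\<in>{0..<v}. (if x \<in> C then 1 else 0 :: real) * (if x \<in> C' then 1 else 0))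
          = (\<Sum>x\<in>{0..<v}. if x \<in> C \<inter> C' then 1 else 0 :: real)" by (intro sum.cong refl) auto
      also have "\<dots> = real (card (C \<inter> C'))" by (rule sum_ind_sub, use sub in blast, simp)
      finally have eq: "(\<Sum>x\<in>{0..<v}. (if x \<in> C then 1 else 0 :: real) * (if x \<in> C' then 1 else 0)) = real (card (C \<inter> C'))" .
      show "(\<Sum>x\<in>{0..<v}. (if x \<in> C then 1 else 0 :: real) * (if x \<in> C' then 1 else 0)) = a + (if C = C' then c - a else 0)"
        unfolding eq using cC[OF C] aC[OF C C'] by auto
    qed
    also have "\<dots> = (\<Sum>C\<in>D. N * a + (c - a))" by (intro sum.cong refl) (simp add: sum.distrib fD N_def)
    also have "\<dots> = N * (N * a + (c - a))" unfolding N_def by simp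
    finally show ?thesis by (simp add: algebra_simps)
  qed
  have vp: "real v > 0" using vpos by simp
  have Np: "N > 0" unfolding N_def using Y fD by (simp add: card_gt_0_iff) blast
  have Q: "(\<Sum>x\<in>{0..<v}. (real v * d x - N * c) * (real v * d x - N * c)) = real v * N * (real v * c + real v * (N - 1) * a - N * c * c)"
  proof -
    have "(\<Sum>x\<in>{0..<v}. (real v * d x - N * c) * (real v * d x - N * c))
        = real v * real v * (\<Sum>x\<in>{0..<v}. d x * d x) - 2 * real v * N * c * (\<Sum>x\<in>{0..<v}. d x) + real v * (N * c * (N * c))"
      by (simp add: algebra_simps sum.distrib sum_subtractf sum_distrib_left)
    then show ?thesis unfolding Sd Sd2 by (simp add: algebra_simps)
  qed
  have "0 \<le> (\<Sum>x\<in>{0..<v}. (real v * d x - N * c) * (real v * d x - N * c))" by (intro sum_nonneg) simp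
  then have "0 \<le> real v * N * (real v * c + real v * (N - 1) * a - N * c * c)" using Q by simp
  then have X0: "0 \<le> real v * c + real v * (N - 1) * a - N * c * c" using vp Np
    by (metis mult_pos_pos zero_le_mult_iff not_le)
  have ineq: "N * (c * c - real v * a) \<le> real v * (c - a)" using X0 by (simp add: algebra_simps)
  have skn: "s - real k \<noteq> 0" using sneg rk rpos by linarith
  have R4': "real k * (1 + r) = s * (s - r)" using R4 by simp
  have "(1 + r) * (r * r + s) * (r * r + s) * ((s - real k) * (c - a) - (c + 1) * (s * c - a * (s - real k))) = 0"
    by (rule alg_I5[OF R4' cf af])
  then have i5: "(s - real k) * (c - a) = (c + 1) * (s * c - a * (s - real k))" using nz rpos by simp
  have "c * ((s - real k) * (c - a)) = c * ((c + 1) * (s * c - a * (s - real k)))" using i5 by simp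
  moreover have "c * ((s - real k) * (c - a)) = (c * (s - real k)) * (c - a)" by (simp only: mult.assoc)
  moreover have "c * ((c + 1) * (s * c - a * (s - real k))) = (c + 1) * (s * c * c - a * (c * (s - real k)))"
    by (Groebner_Basis.algebra)
  ultimately have "(real v * s) * (c - a) = (c + 1) * (s * c * c - a * (real v * s))" unfolding hc by simp
  then have "s * (real v * (c - a)) = s * ((c + 1) * (c * c - real v * a))" by (Groebner_Basis.algebra)
  then have i5': "real v * (c - a) = (c + 1) * (c * c - real v * a)" using sneg by simp
  have cpos: "c + 1 > 0" unfolding c_def by simp
  have pos: "c * c - real v * a > 0"
  proof -
    have "real v * (c - a) > 0" using vp ca by simp
    then show ?thesis using i5' cpos by (simp add: zero_less_mult_iff)
  qed
  from ineq i5' have "N * (c * c - real v * a) \<le> (c + 1) * (c * c - real v * a)" by simp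
  then have "N \<le> c + 1" using pos by simp
  then show "real (card D) \<le> real (card Y) + 1" unfolding N_def c_def .
  assume eqN: "real (card D) = real (card Y) + 1" and x: "x < v"
  have "(1 + r) * (r * r + s) * ((s - real k) * (1 + a) - s * (c + 1)) = 0" by (rule alg_I6[OF R4' cf af])
  then have i6: "(s - real k) * (1 + a) = s * (c + 1)" using nz rpos by simp
  have "c * ((s - real k) * (1 + a)) = c * (s * (c + 1))" using i6 by simp
  moreover have "c * ((s - real k) * (1 + a)) = (c * (s - real k)) * (1 + a)" by (simp only: mult.assoc)
  ultimately have "(real v * s) * (1 + a) = c * (s * (c + 1))" unfolding hc by simp
  then have "s * (real v * (1 + a)) = s * ((c + 1) * c)" by (Groebner_Basis.algebra)
  then have i6': "real v * (1 + a) = (c + 1) * c" using sneg by simp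
  have N1: "N = c + 1" using eqN unfolding N_def c_def .
  have "real v * c + real v * (N - 1) * a - N * c * c = c * (real v * (1 + a) - (c + 1) * c)"
    unfolding N1 by (simp add: algebra_simps)
  then have "real v * c + real v * (N - 1) * a - N * c * c = 0" using i6' by simp
  then have "(\<Sum>x\<in>{0..<v}. (real v * d x - N * c) * (real v * d x - N * c)) = 0"
    using Q by simp
  then have "\<forall>x\<in>{0..<v}. (real v * d x - N * c) * (real v * d x - N * c) = 0"
    using sum_nonneg_eq_0_iff[of "{0..<v}" "\<lambda>x. (real v * d x - N * c) * (real v * d x - N * c)"] by simp
  then have "real v * d x = N * c" using x by simp
  then have "real v * d x = real v * (1 + a)" using i6' N1 by (simp add: algebra_simps)
  then have "d x = 1 + a" using vp by simp
  then show "real (card {C\<in>D. x \<in> C}) = 1 + real (card (Y \<inter> Z))" using dcard a_def by simp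
qed

lemma rs_nz: "r + s \<noteq> 0"
proof
  assume h: "r + s = 0"
  then have s: "s = - r" by simp
  have r2: "r * r = real k - real mu" using R2 s by simp
  have "2 * (r * r) = real k * (1 + r)" using R4 s by (simp add: algebra_simps)
  then have kr: "real k * r = real k - 2 * real mu" using r2 by (simp add: algebra_simps)
  define K where "K = int k"
  define M where "M = int mu"
  have "(real k * r) * (real k * r) = real k * real k * (r * r)" by (simp add: algebra_simps)
  then have "(real k - 2 * real mu) * (real k - 2 * real mu) = real k * real k * (real k - real mu)"
    using kr r2 by simp
  then have "real_of_int ((K - 2 * M)^2) = real_of_int (K^2 * (K - M))"
    unfolding K_def M_def by (simp add: power2_eq_square)
  then have eqi: "(K - 2 * M)^2 = K^2 * (K - M)" by (simp only: of_int_eq_iff)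
  have "K^2 dvd (K - 2 * M)^2" unfolding eqi by simp
  then have dv: "K dvd (K - 2 * M)" using pow_divides_pow_iff[of 2 K "K - 2 * M"] by simp
  have kpos: "K > 0" unfolding K_def using rk rpos by simp
  have "real k * r > 0" using rk rpos by simp
  then have p: "K - 2 * M > 0" using kr unfolding K_def M_def by simp
  have le: "K - 2 * M \<le> K" unfolding M_def by simp
  obtain q where q: "K - 2 * M = K * q" using dv by (auto simp: dvd_def)
  have "q > 0" using p q kpos by (metis zero_less_mult_pos)
  moreover have "q \<le> 1" using le q kpos by (metis mult.right_neutral mult_le_cancel_left_pos)
  ultimately have "q = 1" by simp
  then have "M = 0" using q by simp
  then have "mu = 0" unfolding M_def by simp
  then have "real k * r = real k" using kr by simp
  then have "r = 1" using kpos unfolding K_def by simp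
  then have "real k = 1" using r2 \<open>mu = 0\<close> by simp
  then show False using rk \<open>r = 1\<close> by simp
qed

lemma DESIGN:
  assumes Dd: "\<forall>C\<in>D. coclique v E C \<and> real (card C) * (s - real k) = real v * s"
    and fD: "finite D" and Y: "Y \<in> D" and Z: "Z \<in> D" and YZ: "Y \<noteq> Z"
    and eqN: "real (card D) = real (card Y) + 1"
  shows "symmetric_design Y ((\<lambda>Z. Y \<inter> Z) ` (D - {Y})) ((r^2 + r * s + r - s^2) / (r^2 + s))
     ((s + 1) * r / (r^2 + s)) ((r - r^2) / (r^2 + s))"
proof -
  define c where "c = real (card Y)"
  define a where "a = real (card (Y \<inter> Z))"
  define t where "t = (r - r * r) / (r * r + s)"
  define D' where "D' = D - {Y}"
  have Yd: "coclique v E Y" "real (card Y) * (s - real k) = real v * s" using Dd Y by auto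
  have Zd: "coclique v E Z" "real (card Z) * (s - real k) = real v * s" using Dd Z by auto
  have fY: "finite Y" by (rule cocl_fin[OF Yd(1)])
  have nz: "r * r + s \<noteq> 0" using PAIR(2)[OF Yd Zd YZ] by simp
  have cf: "c * (r * r + s) = r * r + r * s + r - s * s" unfolding c_def by (rule CFORM[OF Yd])
  have af: "a * (r * r + s) = r * (s + 1)" unfolding a_def by (rule AFORM[OF Yd Zd YZ])
  have tf: "t * (r * r + s) = r - r * r" unfolding t_def using nz by simp
  have fD': "finite D'" unfolding D'_def using fD by simp
  have D'd: "coclique v E Z1" "real (card Z1) * (s - real k) = real v * s" "Y \<noteq> Z1" if "Z1 \<in> D'" for Z1
  proof -
    have "Z1 \<in> D" "Z1 \<noteq> Y" using that unfolding D'_def by auto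
    then show "coclique v E Z1" "real (card Z1) * (s - real k) = real v * s" "Y \<noteq> Z1" using Dd by auto
  qed
  have aZ: "real (card (Y \<inter> Z1)) = a" if Z1: "Z1 \<in> D'" for Z1
  proof -
    have "real (card (Y \<inter> Z1)) * (r * r + s) = r * (s + 1)" by (rule AFORM[OF Yd D'd[OF Z1]])
    then have "real (card (Y \<inter> Z1)) * (r * r + s) = a * (r * r + s)" using af by simp
    then show ?thesis using nz by simp
  qed
  have tZ: "real (card (Y \<inter> Z1 \<inter> Z2)) = t" if Z1: "Z1 \<in> D'" and Z2: "Z2 \<in> D'" and ne: "Z1 \<noteq> Z2" for Z1 Z2
  proof -
    have "real (card (Y \<inter> Z1 \<inter> Z2)) * (r * r + s) = r - r * r"
      by (rule TRIPLE[OF Yd D'd(1,2)[OF Z1] D'd(1,2)[OF Z2] D'd(3)[OF Z1] D'd(3)[OF Z2] ne])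
    then have "real (card (Y \<inter> Z1 \<inter> Z2)) * (r * r + s) = t * (r * r + s)" using tf by simp
    then show ?thesis using nz by simp
  qed
  have at: "a \<noteq> t"
  proof
    assume "a = t"
    then have "r * (s + 1) = r - r * r" using af tf by simp
    then have "r * (r + s) = 0" by (simp add: algebra_simps)
    then show False using rs_nz rpos by simp
  qed
  have inj: "inj_on (\<lambda>Z. Y \<inter> Z) D'"
  proof (rule inj_onI, rule ccontr)
    fix Z1 Z2 assume Z1: "Z1 \<in> D'" and Z2: "Z2 \<in> D'" and eq: "Y \<inter> Z1 = Y \<inter> Z2" and ne: "Z1 \<noteq> Z2"
    have "Y \<inter> Z1 \<inter> Z2 = Y \<inter> Z1" using eq by blast
    then show False using tZ[OF Z1 Z2 ne] aZ[OF Z1] at by simp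
  qed
  have cD': "real (card D') = c"
  proof -
    have "card D = Suc (card D')" unfolding D'_def by (rule card.remove[OF fD Y])
    then have "real (card D) = real (card D') + 1" by simp
    then show ?thesis using eqN unfolding c_def by linarith
  qed
  have pairs: "real (card {Z1\<in>D'. y \<in> Z1 \<and> y' \<in> Z1}) = t" if y: "y \<in> Y" and y': "y' \<in> Y" and yy: "y \<noteq> y'" for y y'
  proof -
    define ii where "ii Z1 x = (if x \<in> Z1 then 1 else 0 :: real)" for Z1 :: "nat set" and x :: nat
    define u where "u x = (\<Sum>Z1\<in>D'. ii Z1 y * ii Z1 x)" for x
    have ucard: "real (card {Z1\<in>D'. y \<in> Z1 \<and> x \<in> Z1}) = u x" for x
    proof -
      have "real (card {Z1\<in>D'. y \<in> Z1 \<and> x \<in> Z1}) = (\<Sum>Z1\<in>D'. if y \<in> Z1 \<and> x \<in> Z1 then 1 else 0)"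
        by (rule card_sum_ind[OF fD'])
      also have "\<dots> = u x" unfolding u_def ii_def by (intro sum.cong refl) auto
      finally show ?thesis .
    qed
    have yv: "y < v" using cocl_sub[OF Yd(1) y] .
    have my: "u y = a"
    proof -
      have dy: "real (card {C\<in>D. y \<in> C}) = 1 + a" unfolding a_def by (rule BOUND(2)[OF Dd fD Y Z YZ eqN yv])
      have "{C\<in>D. y \<in> C} = insert Y {Z1\<in>D'. y \<in> Z1}" using Y y unfolding D'_def by auto
      moreover have "Y \<notin> {Z1\<in>D'. y \<in> Z1}" unfolding D'_def by simp
      moreover have "finite {Z1\<in>D'. y \<in> Z1}" using fD' by simp
      ultimately have "card {C\<in>D. y \<in> C} = card {Z1\<in>D'. y \<in> Z1} + 1" by simp
      then have "real (card {Z1\<in>D'. y \<in> Z1}) = a" using dy by simp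
      then show ?thesis using ucard[of y] by simp
    qed
    have iiY: "(\<Sum>x\<in>Y. ii Z1 x) = a" if Z1: "Z1 \<in> D'" for Z1
    proof -
      have "(\<Sum>x\<in>Y. ii Z1 x) = real (card {x\<in>Y. x \<in> Z1})" unfolding ii_def by (rule card_sum_ind[OF fY, symmetric])
      also have "{x\<in>Y. x \<in> Z1} = Y \<inter> Z1" by blast
      finally show ?thesis using aZ[OF Z1] by simp
    qed
    have iiY2: "(\<Sum>x\<in>Y. ii Z1 x * ii Z2 x) = t + (if Z1 = Z2 then a - t else 0)" if Z1: "Z1 \<in> D'" and Z2: "Z2 \<in> D'" for Z1 Z2
    proof (cases "Z1 = Z2")
      case True
      have "(\<Sum>x\<in>Y. ii Z1 x * ii Z2 x) = (\<Sum>x\<in>Y. ii Z1 x)" unfolding True ii_def by (intro sum.cong refl) auto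
      then show ?thesis using iiY[OF Z1] True by simp
    next
      case False
      have "(\<Sum>x\<in>Y. ii Z1 x * ii Z2 x) = real (card {x\<in>Y. x \<in> Z1 \<and> x \<in> Z2})"
        unfolding ii_def by (subst card_sum_ind[OF fY]) (intro sum.cong refl, auto)
      also have "{x\<in>Y. x \<in> Z1 \<and> x \<in> Z2} = Y \<inter> Z1 \<inter> Z2" by blast
      finally show ?thesis using tZ[OF Z1 Z2 False] False by simp
    qed
    have sy: "(\<Sum>Z1\<in>D'. ii Z1 y) = a"
    proof -
      have "(\<Sum>Z1\<in>D'. ii Z1 y) = (\<Sum>Z1\<in>D'. ii Z1 y * ii Z1 y)" by (intro sum.cong refl) (simp add: ii_def)
      then show ?thesis using my unfolding u_def by simp
    qed
    have S1: "(\<Sum>x\<in>Y. u x) = a * a"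
    proof -
      have "(\<Sum>x\<in>Y. u x) = (\<Sum>Z1\<in>D'. \<Sum>x\<in>Y. ii Z1 y * ii Z1 x)" unfolding u_def by (rule sum.swap)
      also have "\<dots> = (\<Sum>Z1\<in>D'. a * ii Z1 y)"
      proof (intro sum.cong refl)
        fix Z1 assume Z1: "Z1 \<in> D'"
        have "(\<Sum>x\<in>Y. ii Z1 y * ii Z1 x) = ii Z1 y * (\<Sum>x\<in>Y. ii Z1 x)" by (simp add: sum_distrib_left)
        then show "(\<Sum>x\<in>Y. ii Z1 y * ii Z1 x) = a * ii Z1 y" using iiY[OF Z1] by simp
      qed
      also have "\<dots> = a * (\<Sum>Z1\<in>D'. ii Z1 y)" by (simp add: sum_distrib_left)
      finally show ?thesis using sy by simp
    qed
    have S2: "(\<Sum>x\<in>Y. u x * u x) = a * (t * a + a - t)"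
    proof -
      have "(\<Sum>x\<in>Y. u x * u x) = (\<Sum>x\<in>Y. \<Sum>Z1\<in>D'. \<Sum>Z2\<in>D'. (ii Z1 y * ii Z2 y) * (ii Z1 x * ii Z2 x))"
        unfolding u_def by (simp add: sum_product algebra_simps)
      also have "\<dots> = (\<Sum>Z1\<in>D'. \<Sum>x\<in>Y. \<Sum>Z2\<in>D'. (ii Z1 y * ii Z2 y) * (ii Z1 x * ii Z2 x))" by (rule sum.swap)
      also have "\<dots> = (\<Sum>Z1\<in>D'. \<Sum>Z2\<in>D'. \<Sum>x\<in>Y. (ii Z1 y * ii Z2 y) * (ii Z1 x * ii Z2 x))" by (intro sum.cong refl sum.swap)
      also have "\<dots> = (\<Sum>Z1\<in>D'. \<Sum>Z2\<in>D'. (ii Z1 y * ii Z2 y) * (t + (if Z1 = Z2 then a - t else 0)))"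
        by (intro sum.cong refl) (simp add: sum_distrib_left[symmetric] iiY2)
      also have "\<dots> = (\<Sum>Z1\<in>D'. (t * a) * ii Z1 y + (a - t) * ii Z1 y)"
      proof (intro sum.cong refl)
        fix Z1 assume Z1: "Z1 \<in> D'"
        have "(\<Sum>Z2\<in>D'. (ii Z1 y * ii Z2 y) * (t + (if Z1 = Z2 then a - t else 0)))
            = (\<Sum>Z2\<in>D'. (ii Z1 y * t) * ii Z2 y + (if Z1 = Z2 then (ii Z1 y * ii Z1 y) * (a - t) else 0))"
          by (intro sum.cong refl) (auto simp: algebra_simps)
        also have "\<dots> = (ii Z1 y * t) * (\<Sum>Z2\<in>D'. ii Z2 y) + (ii Z1 y * ii Z1 y) * (a - t)"
          using Z1 fD' by (simp add: sum.distrib sum_distrib_left)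
        also have "\<dots> = (t * a) * ii Z1 y + (a - t) * ii Z1 y" unfolding sy by (simp add: ii_def)
        finally show "(\<Sum>Z2\<in>D'. (ii Z1 y * ii Z2 y) * (t + (if Z1 = Z2 then a - t else 0))) = (t * a) * ii Z1 y + (a - t) * ii Z1 y" .
      qed
      also have "\<dots> = (t * a) * (\<Sum>Z1\<in>D'. ii Z1 y) + (a - t) * (\<Sum>Z1\<in>D'. ii Z1 y)"
        by (simp add: sum.distrib sum_distrib_left)
      also have "\<dots> = (t * a) * a + (a - t) * a" unfolding sy ..
      finally show ?thesis by (simp add: algebra_simps)
    qed
    have fY': "finite (Y - {y})" using fY by simp
    have cY1: "card Y \<ge> 1" using y fY by (metis One_nat_def Suc_leI card_gt_0_iff empty_iff)
    have cY': "real (card (Y - {y})) = c - 1" unfolding c_def using y fY cY1 by (simp add: of_nat_diff)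
    have T1: "(\<Sum>x\<in>Y - {y}. u x) = a * a - a"
      using S1 my sum.remove[OF fY y, of u] by simp
    have T2: "(\<Sum>x\<in>Y - {y}. u x * u x) = a * (t * a + a - t) - a * a"
      using S2 my sum.remove[OF fY y, of "\<lambda>x. u x * u x"] by simp
    have "(\<Sum>x\<in>Y - {y}. (u x - t) * (u x - t)) = (\<Sum>x\<in>Y - {y}. u x * u x) - 2 * t * (\<Sum>x\<in>Y - {y}. u x) + t * t * real (card (Y - {y}))"
      by (simp add: algebra_simps sum.distrib sum_subtractf sum_distrib_left)
    also have "\<dots> = t * (t * (c - 1) - a * (a - 1))" unfolding T1 T2 cY' by (simp add: algebra_simps)
    also have "t * (c - 1) - a * (a - 1) = 0"
    proof -
      have "(r * r + s) * (r * r + s) * (t * (c - 1) - a * (a - 1)) = 0" by (rule alg_I7[OF cf af tf])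
      then show ?thesis using nz by simp
    qed
    finally have "(\<Sum>x\<in>Y - {y}. (u x - t) * (u x - t)) = 0" by simp
    then have "\<forall>x\<in>Y - {y}. (u x - t) * (u x - t) = 0"
      using sum_nonneg_eq_0_iff[OF fY', of "\<lambda>x. (u x - t) * (u x - t)"] by simp
    then have "u y' = t" using y' yy by simp
    then show ?thesis using ucard[of y'] by simp
  qed
  show ?thesis
    unfolding symmetric_design_def design2_def
  proof (intro conjI ballI impI)
    show "finite Y" by (rule fY)
    show "real (card Y) = (r^2 + r * s + r - s^2) / (r^2 + s)"
      using cf nz unfolding c_def by (simp add: power2_eq_square field_simps)
    fix b assume b: "b \<in> (\<lambda>Z. Y \<inter> Z) ` (D - {Y})"
    then obtain Z1 where Z1: "Z1 \<in> D'" and bZ: "b = Y \<inter> Z1" unfolding D'_def by auto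
    show "b \<subseteq> Y" using bZ by blast
    show "real (card b) = (s + 1) * r / (r^2 + s)" using aZ[OF Z1] af nz bZ by (simp add: power2_eq_square field_simps)
  next
    fix x y assume x: "x \<in> Y" and y: "y \<in> Y" and xy: "x \<noteq> y"
    have "{b \<in> (\<lambda>Z. Y \<inter> Z) ` (D - {Y}). x \<in> b \<and> y \<in> b} = (\<lambda>Z. Y \<inter> Z) ` {Z1\<in>D'. x \<in> Z1 \<and> y \<in> Z1}"
      using x y unfolding D'_def by auto
    moreover have "card ((\<lambda>Z. Y \<inter> Z) ` {Z1\<in>D'. x \<in> Z1 \<and> y \<in> Z1}) = card {Z1\<in>D'. x \<in> Z1 \<and> y \<in> Z1}"
      by (rule card_image, rule inj_on_subset[OF inj], auto)
    ultimately show "real (card {b \<in> (\<lambda>Z. Y \<inter> Z) ` (D - {Y}). x \<in> b \<and> y \<in> b}) = (r - r^2) / (r^2 + s)"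
      using pairs[OF x y xy] unfolding t_def by (simp add: power2_eq_square)
  next
    have "card ((\<lambda>Z. Y \<inter> Z) ` (D - {Y})) = card D'" unfolding D'_def by (rule card_image[OF inj[unfolded D'_def]])
    then show "real (card ((\<lambda>Z. Y \<inter> Z) ` (D - {Y}))) = (r^2 + r * s + r - s^2) / (r^2 + s)"
      using cD' cf nz by (simp add: power2_eq_square field_simps)
  qed
qed

lemma COPRIME:
  assumes cop: "\<exists>A B :: int. r = of_int A \<and> s = of_int B \<and> coprime A B" and r1: "r > 1"
    and X: "coclique v E X" "real (card X) * (s - real k) = real v * s"
    and Y: "coclique v E Y" "real (card Y) * (s - real k) = real v * s"
    and Z: "coclique v E Z" "real (card Z) * (s - real k) = real v * s"
    and XY: "X \<noteq> Y" and XZ: "X \<noteq> Z" and YZ: "Y \<noteq> Z"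
  shows False
proof -
  obtain A B :: int where AB: "r = of_int A" "s = of_int B" "coprime A B" using cop by blast
  define t where "t = card (X \<inter> Y \<inter> Z)"
  have tr: "real t * (r * r + s) = r - r * r" unfolding t_def by (rule TRIPLE[OF X Y Z XY XZ YZ])
  have neg: "r - r * r < 0" using r1 by (simp add: algebra_simps)
  have "real t * (r * r + s) < 0" using tr neg by simp
  then have tpos: "real t > 0" and dneg: "r * r + s < 0"
    by (auto simp: mult_less_0_iff)
  define d where "d = - (A * A + B)"
  have dr: "real_of_int d = - (r * r + s)" unfolding d_def AB by simp
  have dpos: "d > 0" using dneg dr by simp
  have "real t * real_of_int d = real_of_int A * real_of_int A - real_of_int A"
    using tr dr unfolding AB by (Groebner_Basis.algebra)
  then have "real_of_int (int t * d) = real_of_int (A * (A - 1))" by (simp add: algebra_simps)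
  then have td: "int t * d = A * (A - 1)" by (simp only: of_int_eq_iff)
  have cdA: "coprime d A"
  proof (rule coprimeI)
    fix g assume g1: "g dvd d" and g2: "g dvd A"
    have "g dvd A * A" using g2 by simp
    then have "g dvd (A * A + B)" using g1 unfolding d_def by (metis dvd_minus_iff)
    then have "g dvd B" using \<open>g dvd A * A\<close> by (metis dvd_add_right_iff)
    then show "is_unit g" using AB(3) g2 coprime_common_divisor by blast
  qed
  have "d dvd A * (A - 1)" using td by (metis dvd_triv_right)
  then have "d dvd (A - 1)" using cdA by (metis coprime_dvd_mult_right_iff mult.commute)
  moreover have "A - 1 > 0" using r1 AB(1) by simp
  ultimately have "d \<le> A - 1" by (rule zdvd_imp_le)
  then have dle: "real_of_int d \<le> r - 1" using AB(1) by simp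
  have R1': "real lam = real mu + r + s" using R1 by simp
  have R2': "real mu = real k + r * s" using R2 by simp
  have L: "(1 + r) * real lam = s * s + s * (r * r + r + 1) + r * r + r" by (rule alg_lam[OF R1' R2' R4])
  define D where "D = real_of_int d"
  have sD: "s = - (r * r + D)" using dr unfolding D_def by simp
  have "s * s + s * (r * r + r + 1) + r * r + r = (r * r + D) * (D - r - 1) + r * (r + 1)"
    unfolding sD by (simp add: algebra_simps)
  moreover have "(r * r + D) * (D - r - 1) \<le> (r * r + D) * (- 2)"
    by (rule mult_left_mono) (use dle dpos D_def in auto)
  ultimately have "(1 + r) * real lam \<le> - r * r + r - 2 * D" using L by (simp add: algebra_simps)
  moreover have "- r * r + r - 2 * D < 0" using neg dpos D_def by simp
  moreover have "(1 + r) * real lam \<ge> 0" using rpos by simp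
  ultimately show False by linarith
qed

lemma two_elems: assumes "finite D" "card D \<ge> 2" obtains Y Z where "Y \<in> D" "Z \<in> D" "Y \<noteq> Z"
proof -
  obtain Y where Y: "Y \<in> D" using assms by (metis card.empty ex_in_conv not_numeral_le_zero)
  have "card (D - {Y}) \<ge> 1" using assms Y by (simp add: card_Diff_singleton)
  then obtain Z where "Z \<in> D - {Y}" by (metis card.empty ex_in_conv not_one_le_zero)
  then show ?thesis using that Y by blast
qed

lemma three_elems: assumes "finite D" "card D \<ge> 3" obtains X Y Z where "X \<in> D" "Y \<in> D" "Z \<in> D" "X \<noteq> Y" "X \<noteq> Z" "Y \<noteq> Z"
proof -
  obtain X where X: "X \<in> D" using assms by (metis card.empty ex_in_conv not_numeral_le_zero)
  have "card (D - {X}) \<ge> 2" using assms X by (simp add: card_Diff_singleton)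
  then obtain Y Z where "Y \<in> D - {X}" "Z \<in> D - {X}" "Y \<noteq> Z" using two_elems[of "D - {X}"] assms(1) by auto
  then show ?thesis using that X by blast
qed

lemma MAIN:
  fixes D :: "nat set set" and mm :: nat
  assumes Ddef: "\<And>C. C \<in> D \<longleftrightarrow> coclique v E C \<and> real (card C) * (s - real k) = real v * s"
    and mmc: "real mm * (s - real k) = real v * s"
  shows
    "(\<forall>Y\<in>D. \<forall>Z\<in>D. Y \<noteq> Z \<longrightarrow>
        symmetric_design (Y - Z) ((\<lambda>z. {y\<in>Y. E y z}) ` (Z - Y))
          ((r^2 - s^2) / (r^2 + s)) (- s) (- (r^2) - s)
      \<and> real (card (Y \<inter> Z)) = real mm - (r^2 - s^2) / (r^2 + s)
      \<and> real (card (Y \<inter> Z)) = (s + 1) * r / (r^2 + s)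
      \<and> (\<forall>w<v. w \<notin> Y \<and> w \<notin> Z \<longrightarrow>
            real (card ({y\<in>Y. E y w} \<inter> (Y \<inter> Z))) = r))
   \<and> card D \<le> mm + 1
   \<and> (card D = mm + 1 \<longrightarrow>
        (\<exists>(P::nat set) Bs. symmetric_design P Bs
            ((r^2 + r * s + r - s^2) / (r^2 + s))
            ((s + 1) * r / (r^2 + s))
            ((r - r^2) / (r^2 + s)))
      \<and> (\<forall>x<v. real (card {C\<in>D. x \<in> C}) = 1 + (s + 1) * r / (r^2 + s)))
   \<and> (\<forall>X\<in>D. \<forall>Y\<in>D. \<forall>Z\<in>D. X \<noteq> Y \<and> X \<noteq> Z \<and> Y \<noteq> Z \<longrightarrow>
        real (card (X \<inter> Y \<inter> Z)) = (r - r^2) / (r^2 + s))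
   \<and> ((\<exists>a b :: int. r = of_int a \<and> s = of_int b \<and> coprime a b) \<and> r > 1
        \<longrightarrow> card D \<le> 2)"
proof -
  have DD: "C \<in> D \<Longrightarrow> coclique v E C" "C \<in> D \<Longrightarrow> real (card C) * (s - real k) = real v * s" for C
    using Ddef by auto
  have fD: "finite D"
  proof (rule finite_subset)
    show "D \<subseteq> Pow {0..<v}" using DD(1) unfolding coclique_def by blast
  qed simp
  have mmC: "real (card C) = real mm" if "C \<in> D" for C
  proof -
    have "real (card C) * (s - real k) = real mm * (s - real k)" using DD(2)[OF that] mmc by simp
    moreover have "s - real k \<noteq> 0" using sneg rk rpos by linarith
    ultimately show ?thesis by simp
  qed
  have sq: "r^2 = r * r" "s^2 = s * s" by (simp_all add: power2_eq_square)
  have P1: "\<forall>Y\<in>D. \<forall>Z\<in>D. Y \<noteq> Z \<longrightarrow>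
        symmetric_design (Y - Z) ((\<lambda>z. {y\<in>Y. E y z}) ` (Z - Y))
          ((r^2 - s^2) / (r^2 + s)) (- s) (- (r^2) - s)
      \<and> real (card (Y \<inter> Z)) = real mm - (r^2 - s^2) / (r^2 + s)
      \<and> real (card (Y \<inter> Z)) = (s + 1) * r / (r^2 + s)
      \<and> (\<forall>w<v. w \<notin> Y \<and> w \<notin> Z \<longrightarrow>
            real (card ({y\<in>Y. E y w} \<inter> (Y \<inter> Z))) = r)"
  proof (intro ballI impI conjI allI)
    fix Y Z assume Y: "Y \<in> D" and Z: "Z \<in> D" and YZ: "Y \<noteq> Z"
    note Yd = DD(1,2)[OF Y] and Zd = DD(1,2)[OF Z]
    note pr = PAIR[OF Yd Zd YZ]
    have fY: "finite Y" by (rule cocl_fin[OF Yd(1)])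
    have nz: "r * r + s \<noteq> 0" using pr(2) by simp
    have "real (card (Y - Z)) * (r * r + s) = r * r - s * s" using pr(1) by (Groebner_Basis.algebra)
    then have nval: "real (card (Y - Z)) = (r^2 - s^2) / (r^2 + s)"
      using nz unfolding sq by (simp add: eq_divide_eq)
    show "symmetric_design (Y - Z) ((\<lambda>z. {y\<in>Y. E y z}) ` (Z - Y)) ((r^2 - s^2) / (r^2 + s)) (- s) (- (r^2) - s)"
      unfolding symmetric_design_def design2_def
    proof (intro conjI ballI impI)
      show "finite (Y - Z)" using fY by simp
      show "real (card (Y - Z)) = (r^2 - s^2) / (r^2 + s)" by (rule nval)
      fix b assume "b \<in> (\<lambda>z. {y\<in>Y. E y z}) ` (Z - Y)"
      then obtain z where z: "z \<in> Z - Y" and bz: "b = {y\<in>Y. E y z}" by auto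
      show "b \<subseteq> Y - Z" using pr(3) z bz by blast
      show "real (card b) = - s" using pr(3) z bz by blast
    next
      fix x y assume x: "x \<in> Y - Z" and y: "y \<in> Y - Z" and xy: "x \<noteq> y"
      have "{b \<in> (\<lambda>z. {y\<in>Y. E y z}) ` (Z - Y). x \<in> b \<and> y \<in> b} = (\<lambda>z. {y\<in>Y. E y z}) ` {z\<in>Z - Y. E x z \<and> E y z}"
        using x y by auto
      moreover have "card ((\<lambda>z. {y\<in>Y. E y z}) ` {z\<in>Z - Y. E x z \<and> E y z}) = card {z\<in>Z - Y. E x z \<and> E y z}"
        by (rule card_image, rule inj_on_subset[OF pr(4)], auto)
      ultimately show "real (card {b \<in> (\<lambda>z. {y\<in>Y. E y z}) ` (Z - Y). x \<in> b \<and> y \<in> b}) = - (r^2) - s"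
        using pr(5) x y xy unfolding sq by auto
    next
      have "card ((\<lambda>z. {y\<in>Y. E y z}) ` (Z - Y)) = card (Z - Y)" by (rule card_image[OF pr(4)])
      then show "real (card ((\<lambda>z. {y\<in>Y. E y z}) ` (Z - Y))) = (r^2 - s^2) / (r^2 + s)"
        using pr(6) nval by simp
    qed
    have "card Y = card (Y - Z) + card (Y \<inter> Z)" by (rule card_YZ[OF fY])
    then show "real (card (Y \<inter> Z)) = real mm - (r^2 - s^2) / (r^2 + s)" using nval mmC[OF Y] by simp
    show "real (card (Y \<inter> Z)) = (s + 1) * r / (r^2 + s)"
      using AFORM[OF Yd Zd YZ] nz unfolding sq by (simp add: field_simps)
    fix w assume w: "w < v" and wn: "w \<notin> Y \<and> w \<notin> Z"
    have "{y\<in>Y. E y w} \<inter> (Y \<inter> Z) = {u\<in>Y \<inter> Z. E u w}" by blast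
    then have "real (card ({y\<in>Y. E y w} \<inter> (Y \<inter> Z))) = (\<Sum>u\<in>Y \<inter> Z. e u w)" using card_E1[of "Y \<inter> Z" w] fY by simp
    also have "\<dots> = (\<Sum>u\<in>Y \<inter> Z. e w u)"
    proof (intro sum.cong refl)
      fix u assume "u \<in> Y \<inter> Z"
      then have "u < v" using cocl_sub[OF Yd(1)] by blast
      then show "e u w = e w u" using e_sym w by blast
    qed
    also have "\<dots> = r" using CPROP[OF Yd Zd YZ w] wn by simp
    finally show "real (card ({y\<in>Y. E y w} \<inter> (Y \<inter> Z))) = r" .
  qed
  have mmpos: "mm \<ge> 1"
  proof -
    have "real v * s < 0" using vpos sneg by (simp add: mult_pos_neg)
    then have "real mm * (s - real k) < 0" using mmc by simp
    then have "real mm > 0" using sneg by (simp add: mult_less_0_iff)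
    then show ?thesis by simp
  qed
  have P2: "card D \<le> mm + 1"
  proof (cases "card D \<ge> 2")
    case True
    then obtain Y Z where Y: "Y \<in> D" and Z: "Z \<in> D" and YZ: "Y \<noteq> Z" using two_elems[OF fD] by blast
    have "real (card D) \<le> real (card Y) + 1" by (rule BOUND(1)[OF _ fD Y Z YZ]) (use DD in blast)
    then show ?thesis using mmC[OF Y] by simp
  qed simp
  have P3: "card D = mm + 1 \<longrightarrow>
        (\<exists>(P::nat set) Bs. symmetric_design P Bs
            ((r^2 + r * s + r - s^2) / (r^2 + s))
            ((s + 1) * r / (r^2 + s))
            ((r - r^2) / (r^2 + s)))
      \<and> (\<forall>x<v. real (card {C\<in>D. x \<in> C}) = 1 + (s + 1) * r / (r^2 + s))"
  proof (intro impI conjI allI)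
    assume eq: "card D = mm + 1"
    then have "card D \<ge> 2" using mmpos by simp
    then obtain Y Z where Y: "Y \<in> D" and Z: "Z \<in> D" and YZ: "Y \<noteq> Z" using two_elems[OF fD] by blast
    have Dd: "\<forall>C\<in>D. coclique v E C \<and> real (card C) * (s - real k) = real v * s" using DD by blast
    have eqN: "real (card D) = real (card Y) + 1" using eq mmC[OF Y] by simp
    show "\<exists>(P::nat set) Bs. symmetric_design P Bs ((r^2 + r * s + r - s^2) / (r^2 + s))
            ((s + 1) * r / (r^2 + s)) ((r - r^2) / (r^2 + s))"
      using DESIGN[OF Dd fD Y Z YZ eqN] by blast
    fix x assume x: "x < v"
    have "real (card {C\<in>D. x \<in> C}) = 1 + real (card (Y \<inter> Z))" by (rule BOUND(2)[OF Dd fD Y Z YZ eqN x])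
    also have "real (card (Y \<inter> Z)) = (s + 1) * r / (r^2 + s)" using P1 Y Z YZ by blast
    finally show "real (card {C\<in>D. x \<in> C}) = 1 + (s + 1) * r / (r^2 + s)" .
  qed
  have P4: "\<forall>X\<in>D. \<forall>Y\<in>D. \<forall>Z\<in>D. X \<noteq> Y \<and> X \<noteq> Z \<and> Y \<noteq> Z \<longrightarrow>
        real (card (X \<inter> Y \<inter> Z)) = (r - r^2) / (r^2 + s)"
  proof (intro ballI impI)
    fix X Y Z assume X: "X \<in> D" and Y: "Y \<in> D" and Z: "Z \<in> D" and ne: "X \<noteq> Y \<and> X \<noteq> Z \<and> Y \<noteq> Z"
    have nz: "r * r + s \<noteq> 0" using PAIR(2)[OF DD(1,2)[OF Y] DD(1,2)[OF Z]] ne by simp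
    have "real (card (X \<inter> Y \<inter> Z)) * (r * r + s) = r - r * r"
      using TRIPLE[OF DD(1,2)[OF X] DD(1,2)[OF Y] DD(1,2)[OF Z]] ne by blast
    then show "real (card (X \<inter> Y \<inter> Z)) = (r - r^2) / (r^2 + s)" using nz unfolding sq by (simp add: field_simps)
  qed
  have P5: "(\<exists>a b :: int. r = of_int a \<and> s = of_int b \<and> coprime a b) \<and> r > 1 \<longrightarrow> card D \<le> 2"
  proof (intro impI)
    assume h: "(\<exists>a b :: int. r = of_int a \<and> s = of_int b \<and> coprime a b) \<and> r > 1"
    show "card D \<le> 2"
    proof (rule ccontr)
      assume "\<not> card D \<le> 2"
      then have "card D \<ge> 3" by simp
      then obtain X Y Z where X: "X \<in> D" and Y: "Y \<in> D" and Z: "Z \<in> D" and ne: "X \<noteq> Y" "X \<noteq> Z" "Y \<noteq> Z"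
        using three_elems[OF fD] by blast
      show False using COPRIME[OF _ _ DD(1,2)[OF X] DD(1,2)[OF Y] DD(1,2)[OF Z] ne] h by blast
    qed
  qed
  show ?thesis using P1 P2 P3 P4 P5 by blast
qed

end

hide_const (open) Coset.order

theorem theorem1p2:
  fixes v k lam mu :: nat and E :: "nat \<Rightarrow> nat \<Rightarrow> bool" and ep em :: real
  defines "A \<equiv> adj_matrix v E"
  defines "mm \<equiv> order em (char_poly A)"
  defines "D \<equiv> {C. delsarte_coclique v E k em C}"
  assumes srg: "srg v E k lam mu"
    and prim: "primitive_graph v E"
    and eig_p: "eigenvalue A ep" and eig_m: "eigenvalue A em"
    and eig_all: "\<forall>x. eigenvalue A x \<longrightarrow> x \<in> {real k, ep, em}"
    and ord: "real k > ep" "ep > 0" "0 > em"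
    and cond: "real v * em = real mm * (em - real k)"
  shows
    "(\<forall>Y\<in>D. \<forall>Z\<in>D. Y \<noteq> Z \<longrightarrow>
        symmetric_design (Y - Z) ((\<lambda>z. {y\<in>Y. E y z}) ` (Z - Y))
          ((ep^2 - em^2) / (ep^2 + em)) (- em) (- (ep^2) - em)
      \<and> real (card (Y \<inter> Z)) = real mm - (ep^2 - em^2) / (ep^2 + em)
      \<and> real (card (Y \<inter> Z)) = (em + 1) * ep / (ep^2 + em)
      \<and> (\<forall>w<v. w \<notin> Y \<and> w \<notin> Z \<longrightarrow>
            real (card ({y\<in>Y. E y w} \<inter> (Y \<inter> Z))) = ep))
   \<and> card D \<le> mm + 1
   \<and> (card D = mm + 1 \<longrightarrow>
        (\<exists>(P::nat set) Bs. symmetric_design P Bs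
            ((ep^2 + ep * em + ep - em^2) / (ep^2 + em))
            ((em + 1) * ep / (ep^2 + em))
            ((ep - ep^2) / (ep^2 + em)))
      \<and> (\<forall>x<v. real (card {C\<in>D. x \<in> C}) = 1 + (em + 1) * ep / (ep^2 + em)))
   \<and> (\<forall>X\<in>D. \<forall>Y\<in>D. \<forall>Z\<in>D. X \<noteq> Y \<and> X \<noteq> Z \<and> Y \<noteq> Z \<longrightarrow>
        real (card (X \<inter> Y \<inter> Z)) = (ep - ep^2) / (ep^2 + em))
   \<and> ((\<exists>a b :: int. ep = of_int a \<and> em = of_int b \<and> coprime a b) \<and> ep > 1
        \<longrightarrow> card D \<le> 2)"
proof -
  have Acar: "A \<in> carrier_mat v v" unfolding A_def adj_gm by (rule gm_carrier)
  have vpos: "0 < v" using eigenvalue_imp_nonzero_dim[OF Acar eig_p] .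
  have ne: "ep \<noteq> real k" "em \<noteq> real k" "ep \<noteq> em" using ord by auto
  note sp = spectral[OF srg eig_p[unfolded A_def] eig_m[unfolded A_def] ne]
  have sp3: "real mm * ((em - real k) * (em - ep)) = real v * real k * (1 + ep)"
    using sp(3) unfolding mm_def A_def .
  have "real v * em * (em - ep) = real mm * (em - real k) * (em - ep)" using cond by simp
  also have "\<dots> = real v * real k * (1 + ep)" using sp3 by (simp add: mult.assoc)
  finally have "real v * (em * (em - ep)) = real v * (real k * (1 + ep))" by (simp add: mult.assoc)
  then have R4: "em * (em - ep) = real k * (1 + ep)" using vpos by simp
  have skn: "em - real k \<noteq> 0" using ord by linarith
  have Ddef: "C \<in> D \<longleftrightarrow> coclique v E C \<and> real (card C) * (em - real k) = real v * em" for C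
    unfolding D_def delsarte_coclique_def using skn by (auto simp: eq_divide_eq)
  have mmc: "real mm * (em - real k) = real v * em" using cond by simp
  show ?thesis
    by (rule MAIN[OF srg sp(1) sp(2) R4 ord(2) ord(1) ord(3) vpos, of D mm, OF Ddef mmc])
qed

end
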